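(* Let $(\mathcal T(n))_{n\in\mathbb N}$ be the triangle Markov chain obtained by iterated random barycentric subdivision started from an arbitrary triangle $\mathcal T(0)$, and let $(X_n,Y_n)$ be the characterizing point of $\mathcal T(n)$. There exists a constant $\chi>0$ (not depending on $\mathcal T(0)$) such that almost surely $$\limsup_{n\to\infty}\frac1n\ln(Y_n)\le-\chi .$$
   Context: A triangle is given by three points of the plane which are not all equal (degenerate triangles with collinear vertices are allowed). Barycentric subdivision: if a triangle has vertices $A,B,C$, let $D,E,F$ be the midpoints of $[A,B],[B,C],[C,A]$ and $G$ its barycenter; the medians cut it into the six triangles $\{A,D,G\},\{D,B,G\},\{B,E,G\},\{E,C,G\},\{C,F,G\},\{F,A,G\}$. The triangle Markov chain: $\mathcal T(0)$ is given and, for each $n$, $\mathcal T(n+1)$ is chosen uniformly at random among the six triangles of the barycentric subdivision of $\mathcal T(n)$, independently of all previous choices. Characterizing point: for any triangle there is a similitude of the plane mapping it onto a triangle with vertices $(0,0)$, $(1,0)$, $(x,y)$, with $0\le x\le 1/2$, $y\ge 0$, sending its longest edge onto $[(0,0),(1,0)]$ and its shortest edge onto $[(0,0),(x,y)]$; the point $(x,y)$ is uniquely determined and is called the characterizing point of the triangle. The triangle is flat iff $y=0$. Convention $\ln 0=-\infty$. *)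

theory Defs
  imports "HOL-Probability.Probability" "HOL-Probability.Stream_Space"
begin

type_synonym tri = "complex \<times> complex \<times> complex"

definition nondeg :: "tri \<Rightarrow> bool" where
  "nondeg t = (case t of (A, B, C) \<Rightarrow> \<not> (A = B \<and> B = C))"

definition similitude :: "(complex \<Rightarrow> complex) \<Rightarrow> bool" where
  "similitude f \<longleftrightarrow> (\<exists>a b. a \<noteq> 0 \<and>
      ((\<forall>z. f z = a * z + b) \<or> (\<forall>z. f z = a * cnj z + b)))"

text \<open>Characterizing point (x,y) = x + i y: a similitude maps the vertices onto
0, 1, p with 0 <= x <= 1/2, y >= 0 and |p - 1| <= 1, i.e. |p| <= |p - 1| <= 1, so that
the longest edge goes to [0,1] and the shortest to [0,p].\<close>
definition char_point :: "tri \<Rightarrow> complex" where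
  "char_point t = (case t of (A, B, C) \<Rightarrow>
     THE p. 0 \<le> Re p \<and> Re p \<le> 1/2 \<and> 0 \<le> Im p \<and> cmod (p - 1) \<le> 1 \<and>
            (\<exists>f. similitude f \<and> f ` {A, B, C} = {0, 1, p}))"

definition subdiv :: "tri \<Rightarrow> nat \<Rightarrow> tri" where
  "subdiv t k = (case t of (A, B, C) \<Rightarrow>
     (let D = (A + B) / 2; E = (B + C) / 2; F = (C + A) / 2; G = (A + B + C) / 3 in
      [(A, D, G), (D, B, G), (B, E, G), (E, C, G), (C, F, G), (F, A, G)] ! k))"

fun tri_chain :: "tri \<Rightarrow> nat stream \<Rightarrow> nat \<Rightarrow> tri" where
  "tri_chain T0 \<omega> 0 = T0"
| "tri_chain T0 \<omega> (Suc n) = subdiv (tri_chain T0 \<omega> n) (\<omega> !! n)"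

definition choice_space :: "nat stream measure" where
  "choice_space = stream_space (measure_pmf (pmf_of_set {0..<6}))"

definition lnE :: "real \<Rightarrow> ereal" where
  "lnE y = (if y \<le> 0 then -\<infinity> else ereal (ln y))"

end

theory Submission
  imports Defs
begin


definition Qf :: "real \<Rightarrow> real \<Rightarrow> real" where "Qf s t = s^2 - s*t + t^2"

definition qc :: "nat \<Rightarrow> real \<times> real \<times> real" where
  "qc k = [(7,2,4),(13,-10,4),(13,-16,7),(7,-16,13),(4,-10,13),(4,2,7)] ! k"

definition qk :: "nat \<Rightarrow> real \<Rightarrow> real \<Rightarrow> real" where
  "qk k s t = fst (qc k) * s^2 + fst (snd (qc k)) * s * t + snd (snd (qc k)) * t^2"

definition Sg :: "real \<Rightarrow> real \<Rightarrow> real" where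
  "Sg s t = (\<Sum>k<6. sqrt (6 * Qf s t / qk k s t))"

lemma Sg_expand: "Sg s t = sqrt (6 * Qf s t / qk 0 s t) + sqrt (6 * Qf s t / qk 1 s t)
   + sqrt (6 * Qf s t / qk 2 s t) + sqrt (6 * Qf s t / qk 3 s t) + sqrt (6 * Qf s t / qk 4 s t)
   + sqrt (6 * Qf s t / qk 5 s t)"
  by (simp add: Sg_def eval_nat_numeral)

lemma qk_simps:
  "qk 0 s t = 7* s^2 + 2* s*t + 4*t^2" "qk 1 s t = 13* s^2 - 10* s*t + 4*t^2"
  "qk 2 s t = 13* s^2 - 16* s*t + 7*t^2" "qk 3 s t = 7* s^2 - 16* s*t + 13*t^2"
  "qk 4 s t = 4* s^2 - 10* s*t + 13*t^2" "qk 5 s t = 4* s^2 + 2* s*t + 7*t^2"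
  by (simp_all add: qk_def qc_def)

lemma bern:
  fixes x ua ub al be ga :: real
  assumes "ua \<le> x" "x \<le> ub" "ua < ub"
    "0 \<le> al*ua*ua+be*ua+ga" "0 \<le> al*ub*ub+be*ub+ga" "0 \<le> al*ua*ub+be*(ua+ub)/2+ga"
  shows "0 \<le> al*x*x+be*x+ga"
proof -
  define c0 where "c0 = al*ua*ua+be*ua+ga"
  define c2 where "c2 = al*ub*ub+be*ub+ga"
  define c1 where "c1 = al*ua*ub+be*(ua+ub)/2+ga"
  have id: "(ub-ua)^2 * (al*x*x+be*x+ga) = c0*(ub-x)^2 + 2*c1*((x-ua)*(ub-x)) + c2*(x-ua)^2"
    unfolding c0_def c1_def c2_def by (simp add: power2_eq_square field_simps)
  have "0 \<le> c0*(ub-x)^2 + 2*c1*((x-ua)*(ub-x)) + c2*(x-ua)^2"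
    using assms unfolding c0_def[symmetric] c1_def[symmetric] c2_def[symmetric]
    by (intro add_nonneg_nonneg mult_nonneg_nonneg) auto
  then have "0 \<le> (ub-ua)^2 * (al*x*x+be*x+ga)" using id by simp
  moreover have "0 < (ub-ua)^2" using assms by simp
  ultimately show ?thesis by (simp add: zero_le_mult_iff)
qed

lemma chord:
  fixes a b Q q :: real
  assumes "0 < a" "a < b" "0 < Q" "6*a^2*Q \<le> q" "q \<le> 6*b^2*Q"
  shows "sqrt (6*Q/q) \<le> 1/a + a/(b*(a+b)) - q/(6*a*b*(a+b)*Q)"
proof -
  define w where "w = sqrt (q/(6*Q))"
  have qpos: "0 < q" using assms by (smt (verit) mult_pos_pos zero_less_power)
  have w2: "w^2 = q/(6*Q)" unfolding w_def using qpos assms by simp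
  have "a^2 \<le> q/(6*Q)" using assms by (simp add: field_simps)
  hence wa: "a \<le> w" unfolding w_def using assms by (metis less_imp_le real_le_rsqrt)
  have "q/(6*Q) \<le> b^2" using assms by (simp add: field_simps)
  hence wb: "w \<le> b" unfolding w_def using assms
    by (metis abs_of_pos less_trans real_sqrt_abs real_sqrt_le_mono)
  have wpos: "0 < w" using wa assms by simp
  have s: "sqrt (6*Q/q) = 1/w" unfolding w_def using assms qpos
    by (simp add: real_sqrt_divide)
  have g0: "0 \<le> (w-a)*(b-w)*(w+a+b)"
    using wa wb assms by (intro mult_nonneg_nonneg) auto
  have g: "0 \<le> -(w-a)*(w-b)*(w+a+b)" using g0 by (simp add: algebra_simps)
  have "1/w \<le> 1/a + a/(b*(a+b)) - w^2/(a*b*(a+b))"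
  proof -
    have "a*b*(a+b) \<le> w*b*(a+b) + a^2*w - w^3"
      using g by (simp add: algebra_simps power2_eq_square power3_eq_cube)
    hence nn: "0 \<le> (w*b*(a+b) + a^2*w - w^3 - a*b*(a+b)) / (w*a*b*(a+b))"
      using wpos assms by (intro divide_nonneg_pos) auto
    have "1/a + a/(b*(a+b)) - w^2/(a*b*(a+b)) - 1/w
          = (w*b*(a+b) + a^2*w - w^3 - a*b*(a+b)) / (w*a*b*(a+b))"
    proof -
      have "b > 0" "a + b > 0" using assms by auto
      hence "b*(a+b) \<noteq> 0" "a*b*(a+b) \<noteq> 0" "w*a*b*(a+b) \<noteq> 0" "a \<noteq> 0" "w \<noteq> 0"
        using wpos assms by auto
      thus ?thesis by (simp add: divide_simps) (simp add: algebra_simps power2_eq_square power3_eq_cube)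
    qed
    with nn show ?thesis by linarith
  qed
  also have "w^2/(a*b*(a+b)) = q/(6*a*b*(a+b)*Q)" using w2 by (simp add: field_simps)
  finally show ?thesis using s by simp
qed


lemma chord2:
  fixes a b Q q al be :: real
  assumes "0 < a" "a < b" "0 < Q" "6*a^2*Q \<le> q" "q \<le> 6*b^2*Q"
    "al = 1/a + a/(b*(a+b))" "be = 1/(6*a*b*(a+b))"
  shows "Q * sqrt (6*Q/q) \<le> al*Q - be*q"
proof -
  have "sqrt (6*Q/q) \<le> 1/a + a/(b*(a+b)) - q/(6*a*b*(a+b)*Q)" by (rule chord) (use assms in auto)
  hence "Q * sqrt (6*Q/q) \<le> Q * (1/a + a/(b*(a+b)) - q/(6*a*b*(a+b)*Q))"
    using assms(3) by (simp add: mult_left_mono)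
  also have "\<dots> = al*Q - be*q"
  proof -
    have e1: "Q * (q/(6*a*b*(a+b)*Q)) = q/(6*a*b*(a+b))" using assms(3) by simp
    have e2: "be*q = q/(6*a*b*(a+b))" using assms(7) by simp
    show ?thesis unfolding right_diff_distrib e1 e2 assms(6) by (simp add: algebra_simps)
  qed
  finally show ?thesis .
qed

lemma Qf_pos1: "0 < Qf 1 x"
proof -
  have "Qf 1 x = (x - 1/2)^2 + 3/4" by (simp add: Qf_def power2_eq_square algebra_simps)
  moreover have "0 \<le> (x - 1/2)^2" by simp
  ultimately show ?thesis by linarith
qed

lemma iv0: assumes "(-1) \<le> x" "x \<le> (-1/2)" shows "Sg 1 x \<le> 6*(99/100)"
proof -
  have Q: "0 < Qf 1 x" by (rule Qf_pos1)
  have Qe: "Qf 1 x = x*x - x + 1" by (simp add: Qf_def power2_eq_square)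
  have qe0: "qk 0 1 x = (4)*x*x + (2)*x + (7)" unfolding qk_simps by (simp add: power2_eq_square)
  have lo0: "0 \<le> (53/50)*x*x + (247/50)*x + (203/50)"
    by (rule bern[where ua="(-1)" and ub="(-1/2)"]) (use assms in simp_all)
  have loe0: "qk 0 1 x - 6*(7/10)^2*Qf 1 x = (53/50)*x*x + (247/50)*x + (203/50)" unfolding Qe qe0 by algebra
  have hi0: "0 \<le> (667/5000)*x*x + (-30667/5000)*x + (-14333/5000)"
    by (rule bern[where ua="(-1)" and ub="(-1/2)"]) (use assms in simp_all)
  have hie0: "6*(83/100)^2*Qf 1 x - qk 0 1 x = (667/5000)*x*x + (-30667/5000)*x + (-14333/5000)" unfolding Qe qe0 by algebra
  have c0: "Qf 1 x * sqrt (6*Qf 1 x/qk 0 1 x) \<le> (175990/88893)*Qf 1 x - (50000/266679) * qk 0 1 x"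
    by (rule chord2[where a="(7/10)" and b="(83/100)"]) (use Q lo0 loe0 hi0 hie0 in simp_all)
  have qe1: "qk 1 1 x = (4)*x*x + (-10)*x + (13)" unfolding qk_simps by (simp add: power2_eq_square)
  have lo1: "0 \<le> (-23923/5000)*x*x + (-6077/5000)*x + (21077/5000)"
    by (rule bern[where ua="(-1)" and ub="(-1/2)"]) (use assms in simp_all)
  have loe1: "qk 1 1 x - 6*(121/100)^2*Qf 1 x = (-23923/5000)*x*x + (-6077/5000)*x + (21077/5000)" unfolding Qe qe1 by algebra
  have hi1: "0 \<le> (4436/625)*x*x + (-686/625)*x + (-1189/625)"
    by (rule bern[where ua="(-1)" and ub="(-1/2)"]) (use assms in simp_all)
  have hie1: "6*(34/25)^2*Qf 1 x - qk 1 1 x = (4436/625)*x*x + (-686/625)*x + (-1189/625)" unfolding Qe qe1 by algebra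
  have c1: "Qf 1 x * sqrt (6*Qf 1 x/qk 1 1 x) \<le> (1239825/1057298)*Qf 1 x - (62500/1585947) * qk 1 1 x"
    by (rule chord2[where a="(121/100)" and b="(34/25)"]) (use Q lo1 loe1 hi1 hie1 in simp_all)
  have qe2: "qk 2 1 x = (7)*x*x + (-16)*x + (13)" unfolding qk_simps by (simp add: power2_eq_square)
  have lo2: "0 \<le> (-119/25)*x*x + (-106/25)*x + (31/25)"
    by (rule bern[where ua="(-1)" and ub="(-1/2)"]) (use assms in simp_all)
  have loe2: "qk 2 1 x - 6*(7/5)^2*Qf 1 x = (-119/25)*x*x + (-106/25)*x + (31/25)" unfolding Qe qe2 by algebra
  have hi2: "0 \<le> (3839/625)*x*x + (1786/625)*x + (89/625)"
    by (rule bern[where ua="(-1)" and ub="(-1/2)"]) (use assms in simp_all)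
  have hie2: "6*(37/25)^2*Qf 1 x - qk 2 1 x = (3839/625)*x*x + (1786/625)*x + (89/625)" unfolding Qe qe2 by algebra
  have c2: "Qf 1 x * sqrt (6*Qf 1 x/qk 2 1 x) \<le> (19445/18648)*Qf 1 x - (3125/111888) * qk 2 1 x"
    by (rule chord2[where a="(7/5)" and b="(37/25)"]) (use Q lo2 loe2 hi2 hie2 in simp_all)
  have qe3: "qk 3 1 x = (13)*x*x + (-16)*x + (7)" unfolding qk_simps by (simp add: power2_eq_square)
  have lo3: "0 \<le> (13517/5000)*x*x + (-28517/5000)*x + (-16483/5000)"
    by (rule bern[where ua="(-1)" and ub="(-1/2)"]) (use assms in simp_all)
  have loe3: "qk 3 1 x - 6*(131/100)^2*Qf 1 x = (13517/5000)*x*x + (-28517/5000)*x + (-16483/5000)" unfolding Qe qe3 by algebra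
  have hi3: "0 \<le> (-3653/5000)*x*x + (18653/5000)*x + (26347/5000)"
    by (rule bern[where ua="(-1)" and ub="(-1/2)"]) (use assms in simp_all)
  have hie3: "6*(143/100)^2*Qf 1 x - qk 3 1 x = (-3653/5000)*x*x + (18653/5000)*x + (26347/5000)" unfolding Qe qe3 by algebra
  have c3: "Qf 1 x * sqrt (6*Qf 1 x/qk 3 1 x) \<le> (2817150/2566421)*Qf 1 x - (250000/7699263) * qk 3 1 x"
    by (rule chord2[where a="(131/100)" and b="(143/100)"]) (use Q lo3 loe3 hi3 hie3 in simp_all)
  have qe4: "qk 4 1 x = (13)*x*x + (-10)*x + (4)" unfolding qk_simps by (simp add: power2_eq_square)
  have lo4: "0 \<le> (30653/5000)*x*x + (-15653/5000)*x + (-14347/5000)"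
    by (rule bern[where ua="(-1)" and ub="(-1/2)"]) (use assms in simp_all)
  have loe4: "qk 4 1 x - 6*(107/100)^2*Qf 1 x = (30653/5000)*x*x + (-15653/5000)*x + (-14347/5000)" unfolding Qe qe4 by algebra
  have hi4: "0 \<le> (-2359/625)*x*x + (484/625)*x + (3266/625)"
    by (rule bern[where ua="(-1)" and ub="(-1/2)"]) (use assms in simp_all)
  have hie4: "6*(31/25)^2*Qf 1 x - qk 4 1 x = (-2359/625)*x*x + (484/625)*x + (3266/625)" unfolding Qe qe4 by algebra
  have c4: "Qf 1 x * sqrt (6*Qf 1 x/qk 4 1 x) \<le> (1002325/766227)*Qf 1 x - (125000/2298681) * qk 4 1 x"
    by (rule chord2[where a="(107/100)" and b="(31/25)"]) (use Q lo4 loe4 hi4 hie4 in simp_all)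
  have qe5: "qk 5 1 x = (7)*x*x + (2)*x + (4)" unfolding qk_simps by (simp add: power2_eq_square)
  have lo5: "0 \<le> (5483/1250)*x*x + (5767/1250)*x + (1733/1250)"
    by (rule bern[where ua="(-1)" and ub="(-1/2)"]) (use assms in simp_all)
  have loe5: "qk 5 1 x - 6*(33/50)^2*Qf 1 x = (5483/1250)*x*x + (5767/1250)*x + (1733/1250)" unfolding Qe qe5 by algebra
  have hi5: "0 \<le> (-2431/625)*x*x + (-3194/625)*x + (-556/625)"
    by (rule bern[where ua="(-1)" and ub="(-1/2)"]) (use assms in simp_all)
  have hie5: "6*(18/25)^2*Qf 1 x - qk 5 1 x = (-2431/625)*x*x + (-3194/625)*x + (-556/625)" unfolding Qe qe5 by algebra
  have c5: "Qf 1 x * sqrt (6*Qf 1 x/qk 5 1 x) \<le> (9925/4554)*Qf 1 x - (15625/61479) * qk 5 1 x"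
    by (rule chord2[where a="(33/50)" and b="(18/25)"]) (use Q lo5 loe5 hi5 hie5 in simp_all)
  have tot: "0 \<le> (3288598007575500873366197/2808807777789648885478800)*x*x + (2555177982148701485465339/1404403888894824442739400)*x + (2271920653117897320084947/2808807777789648885478800)"
    by (rule bern[where ua="(-1)" and ub="(-1/2)"]) (use assms in simp_all)
  have tote: "(-1034202935983164480051199/364104711935695225895400) * Qf 1 x + ((50000/266679) * qk 0 1 x + (62500/1585947) * qk 1 1 x + (3125/111888) * qk 2 1 x + (250000/7699263) * qk 3 1 x + (125000/2298681) * qk 4 1 x + (15625/61479) * qk 5 1 x) = (3288598007575500873366197/2808807777789648885478800)*x*x + (2555177982148701485465339/1404403888894824442739400)*x + (2271920653117897320084947/2808807777789648885478800)" unfolding Qe qe0 qe1 qe2 qe3 qe4 qe5 by algebra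
  have "Qf 1 x * Sg 1 x \<le> Qf 1 x * (6*(99/100))" unfolding Sg_expand distrib_left using c0 c1 c2 c3 c4 c5 tot tote by linarith
  thus ?thesis using Q by simp
qed

lemma iv1: assumes "(-1/2) \<le> x" "x \<le> (-1/4)" shows "Sg 1 x \<le> 6*(99/100)"
proof -
  have Q: "0 < Qf 1 x" by (rule Qf_pos1)
  have Qe: "Qf 1 x = x*x - x + 1" by (simp add: Qf_def power2_eq_square)
  have qe0: "qk 0 1 x = (4)*x*x + (2)*x + (7)" unfolding qk_simps by (simp add: power2_eq_square)
  have lo0: "0 \<le> (317/5000)*x*x + (29683/5000)*x + (15317/5000)"
    by (rule bern[where ua="(-1/2)" and ub="(-1/4)"]) (use assms in simp_all)
  have loe0: "qk 0 1 x - 6*(81/100)^2*Qf 1 x = (317/5000)*x*x + (29683/5000)*x + (15317/5000)" unfolding Qe qe0 by algebra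
  have hi0: "0 \<le> (1627/1250)*x*x + (-9127/1250)*x + (-2123/1250)"
    by (rule bern[where ua="(-1/2)" and ub="(-1/4)"]) (use assms in simp_all)
  have hie0: "6*(47/50)^2*Qf 1 x - qk 0 1 x = (1627/1250)*x*x + (-9127/1250)*x + (-2123/1250)" unfolding Qe qe0 by algebra
  have c0: "Qf 1 x * sqrt (6*Qf 1 x/qk 0 1 x) \<le> (46022/26649)*Qf 1 x - (10000/79947) * qk 0 1 x"
    by (rule chord2[where a="(81/100)" and b="(47/50)"]) (use Q lo0 loe0 hi0 hie0 in simp_all)
  have qe1: "qk 1 1 x = (4)*x*x + (-10)*x + (13)" unfolding qk_simps by (simp add: power2_eq_square)
  have lo1: "0 \<le> (-33067/5000)*x*x + (3067/5000)*x + (11933/5000)"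
    by (rule bern[where ua="(-1/2)" and ub="(-1/4)"]) (use assms in simp_all)
  have loe1: "qk 1 1 x - 6*(133/100)^2*Qf 1 x = (-33067/5000)*x*x + (3067/5000)*x + (11933/5000)" unfolding Qe qe1 by algebra
  have hi1: "0 \<le> (41347/5000)*x*x + (-11347/5000)*x + (-3653/5000)"
    by (rule bern[where ua="(-1/2)" and ub="(-1/4)"]) (use assms in simp_all)
  have hie1: "6*(143/100)^2*Qf 1 x - qk 1 1 x = (41347/5000)*x*x + (-11347/5000)*x + (-3653/5000)" unfolding Qe qe1 by algebra
  have c1: "Qf 1 x * sqrt (6*Qf 1 x/qk 1 1 x) \<le> (1428925/1312311)*Qf 1 x - (125000/3936933) * qk 1 1 x"
    by (rule chord2[where a="(133/100)" and b="(143/100)"]) (use Q lo1 loe1 hi1 hie1 in simp_all)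
  have qe2: "qk 2 1 x = (7)*x*x + (-16)*x + (13)" unfolding qk_simps by (simp add: power2_eq_square)
  have lo2: "0 \<le> (-7237/1250)*x*x + (-4013/1250)*x + (263/1250)"
    by (rule bern[where ua="(-1/2)" and ub="(-1/4)"]) (use assms in simp_all)
  have loe2: "qk 2 1 x - 6*(73/50)^2*Qf 1 x = (-7237/1250)*x*x + (-4013/1250)*x + (263/1250)" unfolding Qe qe2 by algebra
  have hi2: "0 \<le> (13/2)*x*x + (5/2)*x + (1/2)"
    by (rule bern[where ua="(-1/2)" and ub="(-1/4)"]) (use assms in simp_all)
  have hie2: "6*(3/2)^2*Qf 1 x - qk 2 1 x = (13/2)*x*x + (5/2)*x + (1/2)" unfolding Qe qe2 by algebra
  have c2: "Qf 1 x * sqrt (6*Qf 1 x/qk 2 1 x) \<le> (16429/16206)*Qf 1 x - (625/24309) * qk 2 1 x"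
    by (rule chord2[where a="(73/50)" and b="(3/2)"]) (use Q lo2 loe2 hi2 hie2 in simp_all)
  have qe3: "qk 3 1 x = (13)*x*x + (-16)*x + (7)" unfolding qk_simps by (simp add: power2_eq_square)
  have lo3: "0 \<le> (21077/5000)*x*x + (-36077/5000)*x + (-8923/5000)"
    by (rule bern[where ua="(-1/2)" and ub="(-1/4)"]) (use assms in simp_all)
  have loe3: "qk 3 1 x - 6*(121/100)^2*Qf 1 x = (21077/5000)*x*x + (-36077/5000)*x + (-8923/5000)" unfolding Qe qe3 by algebra
  have hi3: "0 \<le> (-11933/5000)*x*x + (26933/5000)*x + (18067/5000)"
    by (rule bern[where ua="(-1/2)" and ub="(-1/4)"]) (use assms in simp_all)
  have hie3: "6*(133/100)^2*Qf 1 x - qk 3 1 x = (-11933/5000)*x*x + (26933/5000)*x + (18067/5000)" unfolding Qe qe3 by algebra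
  have c3: "Qf 1 x * sqrt (6*Qf 1 x/qk 3 1 x) \<le> (2421150/2043811)*Qf 1 x - (250000/6131433) * qk 3 1 x"
    by (rule chord2[where a="(121/100)" and b="(133/100)"]) (use Q lo3 loe3 hi3 hie3 in simp_all)
  have qe4: "qk 4 1 x = (13)*x*x + (-10)*x + (4)" unfolding qk_simps by (simp add: power2_eq_square)
  have lo4: "0 \<le> (1517/200)*x*x + (-917/200)*x + (-283/200)"
    by (rule bern[where ua="(-1/2)" and ub="(-1/4)"]) (use assms in simp_all)
  have loe4: "qk 4 1 x - 6*(19/20)^2*Qf 1 x = (1517/200)*x*x + (-917/200)*x + (-283/200)" unfolding Qe qe4 by algebra
  have hi4: "0 \<le> (-29357/5000)*x*x + (14357/5000)*x + (15643/5000)"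
    by (rule bern[where ua="(-1/2)" and ub="(-1/4)"]) (use assms in simp_all)
  have hie4: "6*(109/100)^2*Qf 1 x - qk 4 1 x = (-29357/5000)*x*x + (14357/5000)*x + (15643/5000)" unfolding Qe qe4 by algebra
  have c4: "Qf 1 x * sqrt (6*Qf 1 x/qk 4 1 x) \<le> (156305/105621)*Qf 1 x - (25000/316863) * qk 4 1 x"
    by (rule chord2[where a="(19/20)" and b="(109/100)"]) (use Q lo4 loe4 hi4 hie4 in simp_all)
  have qe5: "qk 5 1 x = (7)*x*x + (2)*x + (4)" unfolding qk_simps by (simp add: power2_eq_square)
  have lo5: "0 \<le> (5483/1250)*x*x + (5767/1250)*x + (1733/1250)"
    by (rule bern[where ua="(-1/2)" and ub="(-1/4)"]) (use assms in simp_all)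
  have loe5: "qk 5 1 x - 6*(33/50)^2*Qf 1 x = (5483/1250)*x*x + (5767/1250)*x + (1733/1250)" unfolding Qe qe5 by algebra
  have hi5: "0 \<le> (-2431/625)*x*x + (-3194/625)*x + (-556/625)"
    by (rule bern[where ua="(-1/2)" and ub="(-1/4)"]) (use assms in simp_all)
  have hie5: "6*(18/25)^2*Qf 1 x - qk 5 1 x = (-2431/625)*x*x + (-3194/625)*x + (-556/625)" unfolding Qe qe5 by algebra
  have c5: "Qf 1 x * sqrt (6*Qf 1 x/qk 5 1 x) \<le> (9925/4554)*Qf 1 x - (15625/61479) * qk 5 1 x"
    by (rule chord2[where a="(33/50)" and b="(18/25)"]) (use Q lo5 loe5 hi5 hie5 in simp_all)
  have tot: "0 \<le> (35655875706414837941/25312612409712277650)*x*x + (85499021417800823873/64687787269264709550)*x + (12826059449163869191/25312612409712277650)"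
    by (rule bern[where ua="(-1/2)" and ub="(-1/4)"]) (use assms in simp_all)
  have tote: "(-1591408226368674352357/582190085423382385950) * Qf 1 x + ((10000/79947) * qk 0 1 x + (125000/3936933) * qk 1 1 x + (625/24309) * qk 2 1 x + (250000/6131433) * qk 3 1 x + (25000/316863) * qk 4 1 x + (15625/61479) * qk 5 1 x) = (35655875706414837941/25312612409712277650)*x*x + (85499021417800823873/64687787269264709550)*x + (12826059449163869191/25312612409712277650)" unfolding Qe qe0 qe1 qe2 qe3 qe4 qe5 by algebra
  have "Qf 1 x * Sg 1 x \<le> Qf 1 x * (6*(99/100))" unfolding Sg_expand distrib_left using c0 c1 c2 c3 c4 c5 tot tote by linarith
  thus ?thesis using Q by simp
qed

lemma iv2: assumes "(-1/4) \<le> x" "x \<le> (0)" shows "Sg 1 x \<le> 6*(99/100)"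
proof -
  have Q: "0 < Qf 1 x" by (rule Qf_pos1)
  have Qe: "Qf 1 x = x*x - x + 1" by (simp add: Qf_def power2_eq_square)
  have qe0: "qk 0 1 x = (4)*x*x + (2)*x + (7)" unfolding qk_simps by (simp add: power2_eq_square)
  have lo0: "0 \<le> (-674/625)*x*x + (4424/625)*x + (1201/625)"
    by (rule bern[where ua="(-1/4)" and ub="(0)"]) (use assms in simp_all)
  have loe0: "qk 0 1 x - 6*(23/25)^2*Qf 1 x = (-674/625)*x*x + (4424/625)*x + (1201/625)" unfolding Qe qe0 by algebra
  have hi0: "0 \<le> (15643/5000)*x*x + (-45643/5000)*x + (643/5000)"
    by (rule bern[where ua="(-1/4)" and ub="(0)"]) (use assms in simp_all)
  have hie0: "6*(109/100)^2*Qf 1 x - qk 0 1 x = (15643/5000)*x*x + (-45643/5000)*x + (643/5000)" unfolding Qe qe0 by algebra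
  have c0: "Qf 1 x * sqrt (6*Qf 1 x/qk 0 1 x) \<le> (759325/503907)*Qf 1 x - (125000/1511721) * qk 0 1 x"
    by (rule chord2[where a="(23/25)" and b="(109/100)"]) (use Q lo0 loe0 hi0 hie0 in simp_all)
  have qe1: "qk 1 1 x = (4)*x*x + (-10)*x + (13)" unfolding qk_simps by (simp add: power2_eq_square)
  have lo1: "0 \<le> (-194/25)*x*x + (44/25)*x + (31/25)"
    by (rule bern[where ua="(-1/4)" and ub="(0)"]) (use assms in simp_all)
  have loe1: "qk 1 1 x - 6*(7/5)^2*Qf 1 x = (-194/25)*x*x + (44/25)*x + (31/25)" unfolding Qe qe1 by algebra
  have hi1: "0 \<le> (5714/625)*x*x + (-1964/625)*x + (89/625)"
    by (rule bern[where ua="(-1/4)" and ub="(0)"]) (use assms in simp_all)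
  have hie1: "6*(37/25)^2*Qf 1 x - qk 1 1 x = (5714/625)*x*x + (-1964/625)*x + (89/625)" unfolding Qe qe1 by algebra
  have c1: "Qf 1 x * sqrt (6*Qf 1 x/qk 1 1 x) \<le> (19445/18648)*Qf 1 x - (3125/111888) * qk 1 1 x"
    by (rule chord2[where a="(7/5)" and b="(37/25)"]) (use Q lo1 loe1 hi1 hie1 in simp_all)
  have qe2: "qk 2 1 x = (7)*x*x + (-16)*x + (13)" unfolding qk_simps by (simp add: power2_eq_square)
  have lo2: "0 \<le> (-7237/1250)*x*x + (-4013/1250)*x + (263/1250)"
    by (rule bern[where ua="(-1/4)" and ub="(0)"]) (use assms in simp_all)
  have loe2: "qk 2 1 x - 6*(73/50)^2*Qf 1 x = (-7237/1250)*x*x + (-4013/1250)*x + (263/1250)" unfolding Qe qe2 by algebra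
  have hi2: "0 \<le> (13/2)*x*x + (5/2)*x + (1/2)"
    by (rule bern[where ua="(-1/4)" and ub="(0)"]) (use assms in simp_all)
  have hie2: "6*(3/2)^2*Qf 1 x - qk 2 1 x = (13/2)*x*x + (5/2)*x + (1/2)" unfolding Qe qe2 by algebra
  have c2: "Qf 1 x * sqrt (6*Qf 1 x/qk 2 1 x) \<le> (16429/16206)*Qf 1 x - (625/24309) * qk 2 1 x"
    by (rule chord2[where a="(73/50)" and b="(3/2)"]) (use Q lo2 loe2 hi2 hie2 in simp_all)
  have qe3: "qk 3 1 x = (13)*x*x + (-16)*x + (7)" unfolding qk_simps by (simp add: power2_eq_square)
  have lo3: "0 \<le> (30653/5000)*x*x + (-45653/5000)*x + (653/5000)"
    by (rule bern[where ua="(-1/4)" and ub="(0)"]) (use assms in simp_all)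
  have loe3: "qk 3 1 x - 6*(107/100)^2*Qf 1 x = (30653/5000)*x*x + (-45653/5000)*x + (653/5000)" unfolding Qe qe3 by algebra
  have hi3: "0 \<le> (-2359/625)*x*x + (4234/625)*x + (1391/625)"
    by (rule bern[where ua="(-1/4)" and ub="(0)"]) (use assms in simp_all)
  have hie3: "6*(31/25)^2*Qf 1 x - qk 3 1 x = (-2359/625)*x*x + (4234/625)*x + (1391/625)" unfolding Qe qe3 by algebra
  have c3: "Qf 1 x * sqrt (6*Qf 1 x/qk 3 1 x) \<le> (1002325/766227)*Qf 1 x - (125000/2298681) * qk 3 1 x"
    by (rule chord2[where a="(107/100)" and b="(31/25)"]) (use Q lo3 loe3 hi3 hie3 in simp_all)
  have qe4: "qk 4 1 x = (13)*x*x + (-10)*x + (4)" unfolding qk_simps by (simp add: power2_eq_square)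
  have lo4: "0 \<le> (45317/5000)*x*x + (-30317/5000)*x + (317/5000)"
    by (rule bern[where ua="(-1/4)" and ub="(0)"]) (use assms in simp_all)
  have loe4: "qk 4 1 x - 6*(81/100)^2*Qf 1 x = (45317/5000)*x*x + (-30317/5000)*x + (317/5000)" unfolding Qe qe4 by algebra
  have hi4: "0 \<le> (-36773/5000)*x*x + (21773/5000)*x + (8227/5000)"
    by (rule bern[where ua="(-1/4)" and ub="(0)"]) (use assms in simp_all)
  have hie4: "6*(97/100)^2*Qf 1 x - qk 4 1 x = (-36773/5000)*x*x + (21773/5000)*x + (8227/5000)" unfolding Qe qe4 by algebra
  have c4: "Qf 1 x * sqrt (6*Qf 1 x/qk 4 1 x) \<le> (1191350/699273)*Qf 1 x - (250000/2097819) * qk 4 1 x"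
    by (rule chord2[where a="(81/100)" and b="(97/100)"]) (use Q lo4 loe4 hi4 hie4 in simp_all)
  have qe5: "qk 5 1 x = (7)*x*x + (2)*x + (4)" unfolding qk_simps by (simp add: power2_eq_square)
  have lo5: "0 \<le> (203/50)*x*x + (247/50)*x + (53/50)"
    by (rule bern[where ua="(-1/4)" and ub="(0)"]) (use assms in simp_all)
  have loe5: "qk 5 1 x - 6*(7/10)^2*Qf 1 x = (203/50)*x*x + (247/50)*x + (53/50)" unfolding Qe qe5 by algebra
  have hi5: "0 \<le> (-14333/5000)*x*x + (-30667/5000)*x + (667/5000)"
    by (rule bern[where ua="(-1/4)" and ub="(0)"]) (use assms in simp_all)
  have hie5: "6*(83/100)^2*Qf 1 x - qk 5 1 x = (-14333/5000)*x*x + (-30667/5000)*x + (667/5000)" unfolding Qe qe5 by algebra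
  have c5: "Qf 1 x * sqrt (6*Qf 1 x/qk 5 1 x) \<le> (175990/88893)*Qf 1 x - (50000/266679) * qk 5 1 x"
    by (rule chord2[where a="(7/10)" and b="(83/100)"]) (use Q lo5 loe5 hi5 hie5 in simp_all)
  have tot: "0 \<le> (108113880331424179762752007/68598550876704997644757800)*x*x + (13819552816810002434663059/34299275438352498822378900)*x + (344197755926092609695277/1282215904237476591490800)"
    by (rule bern[where ua="(-1/4)" and ub="(0)"]) (use assms in simp_all)
  have tote: "(-59795054567289867684218081/22866183625568332548252600) * Qf 1 x + ((125000/1511721) * qk 0 1 x + (3125/111888) * qk 1 1 x + (625/24309) * qk 2 1 x + (125000/2298681) * qk 3 1 x + (250000/2097819) * qk 4 1 x + (50000/266679) * qk 5 1 x) = (108113880331424179762752007/68598550876704997644757800)*x*x + (13819552816810002434663059/34299275438352498822378900)*x + (344197755926092609695277/1282215904237476591490800)" unfolding Qe qe0 qe1 qe2 qe3 qe4 qe5 by algebra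
  have "Qf 1 x * Sg 1 x \<le> Qf 1 x * (6*(99/100))" unfolding Sg_expand distrib_left using c0 c1 c2 c3 c4 c5 tot tote by linarith
  thus ?thesis using Q by simp
qed

lemma iv3: assumes "(0) \<le> x" "x \<le> (1/4)" shows "Sg 1 x \<le> 6*(99/100)"
proof -
  have Q: "0 < Qf 1 x" by (rule Qf_pos1)
  have Qe: "Qf 1 x = x*x - x + 1" by (simp add: Qf_def power2_eq_square)
  have qe0: "qk 0 1 x = (4)*x*x + (2)*x + (7)" unfolding qk_simps by (simp add: power2_eq_square)
  have lo0: "0 \<le> (-14347/5000)*x*x + (44347/5000)*x + (653/5000)"
    by (rule bern[where ua="(0)" and ub="(1/4)"]) (use assms in simp_all)
  have loe0: "qk 0 1 x - 6*(107/100)^2*Qf 1 x = (-14347/5000)*x*x + (44347/5000)*x + (653/5000)" unfolding Qe qe0 by algebra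
  have hi0: "0 \<le> (28387/5000)*x*x + (-58387/5000)*x + (13387/5000)"
    by (rule bern[where ua="(0)" and ub="(1/4)"]) (use assms in simp_all)
  have hie0: "6*(127/100)^2*Qf 1 x - qk 0 1 x = (28387/5000)*x*x + (-58387/5000)*x + (13387/5000)" unfolding Qe qe0 by algebra
  have c0: "Qf 1 x * sqrt (6*Qf 1 x/qk 0 1 x) \<le> (2058350/1589913)*Qf 1 x - (250000/4769739) * qk 0 1 x"
    by (rule chord2[where a="(107/100)" and b="(127/100)"]) (use Q lo0 loe0 hi0 hie0 in simp_all)
  have qe1: "qk 1 1 x = (4)*x*x + (-10)*x + (13)" unfolding qk_simps by (simp add: power2_eq_square)
  have lo1: "0 \<le> (-10987/1250)*x*x + (3487/1250)*x + (263/1250)"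
    by (rule bern[where ua="(0)" and ub="(1/4)"]) (use assms in simp_all)
  have loe1: "qk 1 1 x - 6*(73/50)^2*Qf 1 x = (-10987/1250)*x*x + (3487/1250)*x + (263/1250)" unfolding Qe qe1 by algebra
  have hi1: "0 \<le> (19/2)*x*x + (-7/2)*x + (1/2)"
    by (rule bern[where ua="(0)" and ub="(1/4)"]) (use assms in simp_all)
  have hie1: "6*(3/2)^2*Qf 1 x - qk 1 1 x = (19/2)*x*x + (-7/2)*x + (1/2)" unfolding Qe qe1 by algebra
  have c1: "Qf 1 x * sqrt (6*Qf 1 x/qk 1 1 x) \<le> (16429/16206)*Qf 1 x - (625/24309) * qk 1 1 x"
    by (rule chord2[where a="(73/50)" and b="(3/2)"]) (use Q lo1 loe1 hi1 hie1 in simp_all)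
  have qe2: "qk 2 1 x = (7)*x*x + (-16)*x + (13)" unfolding qk_simps by (simp add: power2_eq_square)
  have lo2: "0 \<le> (-5533/1250)*x*x + (-5717/1250)*x + (1967/1250)"
    by (rule bern[where ua="(0)" and ub="(1/4)"]) (use assms in simp_all)
  have loe2: "qk 2 1 x - 6*(69/50)^2*Qf 1 x = (-5533/1250)*x*x + (-5717/1250)*x + (1967/1250)" unfolding Qe qe2 by algebra
  have hi2: "0 \<le> (3839/625)*x*x + (1786/625)*x + (89/625)"
    by (rule bern[where ua="(0)" and ub="(1/4)"]) (use assms in simp_all)
  have hie2: "6*(37/25)^2*Qf 1 x - qk 2 1 x = (3839/625)*x*x + (1786/625)*x + (89/625)" unfolding Qe qe2 by algebra
  have c2: "Qf 1 x * sqrt (6*Qf 1 x/qk 2 1 x) \<le> (383575/365079)*Qf 1 x - (31250/1095237) * qk 2 1 x"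
    by (rule chord2[where a="(69/50)" and b="(37/25)"]) (use Q lo2 loe2 hi2 hie2 in simp_all)
  have qe3: "qk 3 1 x = (13)*x*x + (-16)*x + (7)" unfolding qk_simps by (simp add: power2_eq_square)
  have lo3: "0 \<le> (42293/5000)*x*x + (-57293/5000)*x + (12293/5000)"
    by (rule bern[where ua="(0)" and ub="(1/4)"]) (use assms in simp_all)
  have loe3: "qk 3 1 x - 6*(87/100)^2*Qf 1 x = (42293/5000)*x*x + (-57293/5000)*x + (12293/5000)" unfolding Qe qe3 by algebra
  have hi3: "0 \<le> (-29357/5000)*x*x + (44357/5000)*x + (643/5000)"
    by (rule bern[where ua="(0)" and ub="(1/4)"]) (use assms in simp_all)
  have hie3: "6*(109/100)^2*Qf 1 x - qk 3 1 x = (-29357/5000)*x*x + (44357/5000)*x + (643/5000)" unfolding Qe qe3 by algebra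
  have c3: "Qf 1 x * sqrt (6*Qf 1 x/qk 3 1 x) \<le> (723325/464667)*Qf 1 x - (125000/1394001) * qk 3 1 x"
    by (rule chord2[where a="(87/100)" and b="(109/100)"]) (use Q lo3 loe3 hi3 hie3 in simp_all)
  have qe4: "qk 4 1 x = (13)*x*x + (-10)*x + (4)" unfolding qk_simps by (simp add: power2_eq_square)
  have lo4: "0 \<le> (6391/625)*x*x + (-4516/625)*x + (766/625)"
    by (rule bern[where ua="(0)" and ub="(1/4)"]) (use assms in simp_all)
  have loe4: "qk 4 1 x - 6*(17/25)^2*Qf 1 x = (6391/625)*x*x + (-4516/625)*x + (766/625)" unfolding Qe qe4 by algebra
  have hi4: "0 \<le> (-44333/5000)*x*x + (29333/5000)*x + (667/5000)"
    by (rule bern[where ua="(0)" and ub="(1/4)"]) (use assms in simp_all)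
  have hie4: "6*(83/100)^2*Qf 1 x - qk 4 1 x = (-44333/5000)*x*x + (29333/5000)*x + (667/5000)" unfolding Qe qe4 by algebra
  have c4: "Qf 1 x * sqrt (6*Qf 1 x/qk 4 1 x) \<le> (428925/213061)*Qf 1 x - (125000/639183) * qk 4 1 x"
    by (rule chord2[where a="(17/25)" and b="(83/100)"]) (use Q lo4 loe4 hi4 hie4 in simp_all)
  have qe5: "qk 5 1 x = (7)*x*x + (2)*x + (4)" unfolding qk_simps by (simp add: power2_eq_square)
  have lo5: "0 \<le> (15317/5000)*x*x + (29683/5000)*x + (317/5000)"
    by (rule bern[where ua="(0)" and ub="(1/4)"]) (use assms in simp_all)
  have loe5: "qk 5 1 x - 6*(81/100)^2*Qf 1 x = (15317/5000)*x*x + (29683/5000)*x + (317/5000)" unfolding Qe qe5 by algebra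
  have hi5: "0 \<le> (-947/1250)*x*x + (-10303/1250)*x + (2803/1250)"
    by (rule bern[where ua="(0)" and ub="(1/4)"]) (use assms in simp_all)
  have hie5: "6*(51/50)^2*Qf 1 x - qk 5 1 x = (-947/1250)*x*x + (-10303/1250)*x + (2803/1250)" unfolding Qe qe5 by algebra
  have c5: "Qf 1 x * sqrt (6*Qf 1 x/qk 5 1 x) \<le> (140150/83997)*Qf 1 x - (250000/2267919) * qk 5 1 x"
    by (rule chord2[where a="(81/100)" and b="(51/50)"]) (use Q lo5 loe5 hi5 hie5 in simp_all)
  have tot: "0 \<le> (33973675897810338146918336/14552859698567647737646275)*x*x + (-14898460531560292142261315768/13286760904792262384471049075)*x + (3528378504845000441170237643/13286760904792262384471049075)"
    by (rule bern[where ua="(0)" and ub="(1/4)"]) (use assms in simp_all)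
  have tote: "(-1307699816194709169146380666/492102255733046754980409225) * Qf 1 x + ((250000/4769739) * qk 0 1 x + (625/24309) * qk 1 1 x + (31250/1095237) * qk 2 1 x + (125000/1394001) * qk 3 1 x + (125000/639183) * qk 4 1 x + (250000/2267919) * qk 5 1 x) = (33973675897810338146918336/14552859698567647737646275)*x*x + (-14898460531560292142261315768/13286760904792262384471049075)*x + (3528378504845000441170237643/13286760904792262384471049075)" unfolding Qe qe0 qe1 qe2 qe3 qe4 qe5 by algebra
  have "Qf 1 x * Sg 1 x \<le> Qf 1 x * (6*(99/100))" unfolding Sg_expand distrib_left using c0 c1 c2 c3 c4 c5 tot tote by linarith
  thus ?thesis using Q by simp
qed

lemma iv4: assumes "(1/4) \<le> x" "x \<le> (3/8)" shows "Sg 1 x \<le> 6*(99/100)"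
proof -
  have Q: "0 < Qf 1 x" by (rule Qf_pos1)
  have Qe: "Qf 1 x = x*x - x + 1" by (simp add: Qf_def power2_eq_square)
  have qe0: "qk 0 1 x = (4)*x*x + (2)*x + (7)" unfolding qk_simps by (simp add: power2_eq_square)
  have lo0: "0 \<le> (-43/8)*x*x + (91/8)*x + (-19/8)"
    by (rule bern[where ua="(1/4)" and ub="(3/8)"]) (use assms in simp_all)
  have loe0: "qk 0 1 x - 6*(5/4)^2*Qf 1 x = (-43/8)*x*x + (91/8)*x + (-19/8)" unfolding Qe qe0 by algebra
  have hi0: "0 \<le> (4436/625)*x*x + (-8186/625)*x + (2561/625)"
    by (rule bern[where ua="(1/4)" and ub="(3/8)"]) (use assms in simp_all)
  have hie0: "6*(34/25)^2*Qf 1 x - qk 0 1 x = (4436/625)*x*x + (-8186/625)*x + (2561/625)" unfolding Qe qe0 by algebra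
  have c0: "Qf 1 x * sqrt (6*Qf 1 x/qk 0 1 x) \<le> (51121/44370)*Qf 1 x - (500/13311) * qk 0 1 x"
    by (rule chord2[where a="(5/4)" and b="(34/25)"]) (use Q lo0 loe0 hi0 hie0 in simp_all)
  have qe1: "qk 1 1 x = (4)*x*x + (-10)*x + (13)" unfolding qk_simps by (simp add: power2_eq_square)
  have lo1: "0 \<le> (-1723/200)*x*x + (523/200)*x + (77/200)"
    by (rule bern[where ua="(1/4)" and ub="(3/8)"]) (use assms in simp_all)
  have loe1: "qk 1 1 x - 6*(29/20)^2*Qf 1 x = (-1723/200)*x*x + (523/200)*x + (77/200)" unfolding Qe qe1 by algebra
  have hi1: "0 \<le> (19/2)*x*x + (-7/2)*x + (1/2)"
    by (rule bern[where ua="(1/4)" and ub="(3/8)"]) (use assms in simp_all)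
  have hie1: "6*(3/2)^2*Qf 1 x - qk 1 1 x = (19/2)*x*x + (-7/2)*x + (1/2)" unfolding Qe qe1 by algebra
  have c1: "Qf 1 x * sqrt (6*Qf 1 x/qk 1 1 x) \<le> (5222/5133)*Qf 1 x - (400/15399) * qk 1 1 x"
    by (rule chord2[where a="(29/20)" and b="(3/2)"]) (use Q lo1 loe1 hi1 hie1 in simp_all)
  have qe2: "qk 2 1 x = (7)*x*x + (-16)*x + (13)" unfolding qk_simps by (simp add: power2_eq_square)
  have lo2: "0 \<le> (-16483/5000)*x*x + (-28517/5000)*x + (13517/5000)"
    by (rule bern[where ua="(1/4)" and ub="(3/8)"]) (use assms in simp_all)
  have loe2: "qk 2 1 x - 6*(131/100)^2*Qf 1 x = (-16483/5000)*x*x + (-28517/5000)*x + (13517/5000)" unfolding Qe qe2 by algebra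
  have hi2: "0 \<le> (119/25)*x*x + (106/25)*x + (-31/25)"
    by (rule bern[where ua="(1/4)" and ub="(3/8)"]) (use assms in simp_all)
  have hie2: "6*(7/5)^2*Qf 1 x - qk 2 1 x = (119/25)*x*x + (106/25)*x + (-31/25)" unfolding Qe qe2 by algebra
  have c2: "Qf 1 x * sqrt (6*Qf 1 x/qk 2 1 x) \<le> (275505/248507)*Qf 1 x - (25000/745521) * qk 2 1 x"
    by (rule chord2[where a="(131/100)" and b="(7/5)"]) (use Q lo2 loe2 hi2 hie2 in simp_all)
  have qe3: "qk 3 1 x = (13)*x*x + (-16)*x + (7)" unfolding qk_simps by (simp add: power2_eq_square)
  have lo3: "0 \<le> (11687/1250)*x*x + (-15437/1250)*x + (4187/1250)"
    by (rule bern[where ua="(1/4)" and ub="(3/8)"]) (use assms in simp_all)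
  have loe3: "qk 3 1 x - 6*(39/50)^2*Qf 1 x = (11687/1250)*x*x + (-15437/1250)*x + (4187/1250)" unfolding Qe qe3 by algebra
  have hi3: "0 \<le> (-41237/5000)*x*x + (56237/5000)*x + (-11237/5000)"
    by (rule bern[where ua="(1/4)" and ub="(3/8)"]) (use assms in simp_all)
  have hie3: "6*(89/100)^2*Qf 1 x - qk 3 1 x = (-41237/5000)*x*x + (56237/5000)*x + (-11237/5000)" unfolding Qe qe3 by algebra
  have c3: "Qf 1 x * sqrt (6*Qf 1 x/qk 3 1 x) \<le> (1047350/579657)*Qf 1 x - (250000/1738971) * qk 3 1 x"
    by (rule chord2[where a="(39/50)" and b="(89/100)"]) (use Q lo3 loe3 hi3 hie3 in simp_all)
  have qe4: "qk 4 1 x = (13)*x*x + (-10)*x + (4)" unfolding qk_simps by (simp add: power2_eq_square)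
  have lo4: "0 \<le> (12983/1250)*x*x + (-9233/1250)*x + (1733/1250)"
    by (rule bern[where ua="(1/4)" and ub="(3/8)"]) (use assms in simp_all)
  have loe4: "qk 4 1 x - 6*(33/50)^2*Qf 1 x = (12983/1250)*x*x + (-9233/1250)*x + (1733/1250)" unfolding Qe qe4 by algebra
  have hi4: "0 \<le> (-503/50)*x*x + (353/50)*x + (-53/50)"
    by (rule bern[where ua="(1/4)" and ub="(3/8)"]) (use assms in simp_all)
  have hie4: "6*(7/10)^2*Qf 1 x - qk 4 1 x = (-503/50)*x*x + (353/50)*x + (-53/50)" unfolding Qe qe4 by algebra
  have c4: "Qf 1 x * sqrt (6*Qf 1 x/qk 4 1 x) \<le> (17345/7854)*Qf 1 x - (3125/11781) * qk 4 1 x"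
    by (rule chord2[where a="(33/50)" and b="(7/10)"]) (use Q lo4 loe4 hi4 hie4 in simp_all)
  have qe5: "qk 5 1 x = (7)*x*x + (2)*x + (4)" unfolding qk_simps by (simp add: power2_eq_square)
  have lo5: "0 \<le> (5597/5000)*x*x + (39403/5000)*x + (-9403/5000)"
    by (rule bern[where ua="(1/4)" and ub="(3/8)"]) (use assms in simp_all)
  have loe5: "qk 5 1 x - 6*(99/100)^2*Qf 1 x = (5597/5000)*x*x + (39403/5000)*x + (-9403/5000)" unfolding Qe qe5 by algebra
  have hi5: "0 \<le> (3307/5000)*x*x + (-48307/5000)*x + (18307/5000)"
    by (rule bern[where ua="(1/4)" and ub="(3/8)"]) (use assms in simp_all)
  have hie5: "6*(113/100)^2*Qf 1 x - qk 5 1 x = (3307/5000)*x*x + (-48307/5000)*x + (18307/5000)" unfolding Qe qe5 by algebra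
  have c5: "Qf 1 x * sqrt (6*Qf 1 x/qk 5 1 x) \<le> (843925/592911)*Qf 1 x - (125000/1778733) * qk 5 1 x"
    by (rule chord2[where a="(99/100)" and b="(113/100)"]) (use Q lo5 loe5 hi5 hie5 in simp_all)
  have tot: "0 \<le> (48599417997340794998389/13801479505764141541350)*x*x + (-10376112586612095911947/3764039865208402238550)*x + (25185049467525007208917/41404438517292424624050)"
    by (rule bern[where ua="(1/4)" and ub="(3/8)"]) (use assms in simp_all)
  have tote: "(-2254320521793970059433/811851735633184796550) * Qf 1 x + ((500/13311) * qk 0 1 x + (400/15399) * qk 1 1 x + (25000/745521) * qk 2 1 x + (250000/1738971) * qk 3 1 x + (3125/11781) * qk 4 1 x + (125000/1778733) * qk 5 1 x) = (48599417997340794998389/13801479505764141541350)*x*x + (-10376112586612095911947/3764039865208402238550)*x + (25185049467525007208917/41404438517292424624050)" unfolding Qe qe0 qe1 qe2 qe3 qe4 qe5 by algebra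
  have "Qf 1 x * Sg 1 x \<le> Qf 1 x * (6*(99/100))" unfolding Sg_expand distrib_left using c0 c1 c2 c3 c4 c5 tot tote by linarith
  thus ?thesis using Q by simp
qed

lemma iv5: assumes "(3/8) \<le> x" "x \<le> (1/2)" shows "Sg 1 x \<le> 6*(99/100)"
proof -
  have Q: "0 < Qf 1 x" by (rule Qf_pos1)
  have Qe: "Qf 1 x = x*x - x + 1" by (simp add: Qf_def power2_eq_square)
  have qe0: "qk 0 1 x = (4)*x*x + (2)*x + (7)" unfolding qk_simps by (simp add: power2_eq_square)
  have lo0: "0 \<le> (-33067/5000)*x*x + (63067/5000)*x + (-18067/5000)"
    by (rule bern[where ua="(3/8)" and ub="(1/2)"]) (use assms in simp_all)
  have loe0: "qk 0 1 x - 6*(133/100)^2*Qf 1 x = (-33067/5000)*x*x + (63067/5000)*x + (-18067/5000)" unfolding Qe qe0 by algebra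
  have hi0: "0 \<le> (41347/5000)*x*x + (-71347/5000)*x + (26347/5000)"
    by (rule bern[where ua="(3/8)" and ub="(1/2)"]) (use assms in simp_all)
  have hie0: "6*(143/100)^2*Qf 1 x - qk 0 1 x = (41347/5000)*x*x + (-71347/5000)*x + (26347/5000)" unfolding Qe qe0 by algebra
  have c0: "Qf 1 x * sqrt (6*Qf 1 x/qk 0 1 x) \<le> (1428925/1312311)*Qf 1 x - (125000/3936933) * qk 0 1 x"
    by (rule chord2[where a="(133/100)" and b="(143/100)"]) (use Q lo0 loe0 hi0 hie0 in simp_all)
  have qe1: "qk 1 1 x = (4)*x*x + (-10)*x + (13)" unfolding qk_simps by (simp add: power2_eq_square)
  have lo1: "0 \<le> (-194/25)*x*x + (44/25)*x + (31/25)"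
    by (rule bern[where ua="(3/8)" and ub="(1/2)"]) (use assms in simp_all)
  have loe1: "qk 1 1 x - 6*(7/5)^2*Qf 1 x = (-194/25)*x*x + (44/25)*x + (31/25)" unfolding Qe qe1 by algebra
  have hi1: "0 \<le> (44827/5000)*x*x + (-14827/5000)*x + (-173/5000)"
    by (rule bern[where ua="(3/8)" and ub="(1/2)"]) (use assms in simp_all)
  have hie1: "6*(147/100)^2*Qf 1 x - qk 1 1 x = (44827/5000)*x*x + (-14827/5000)*x + (-173/5000)" unfolding Qe qe1 by algebra
  have c1: "Qf 1 x * sqrt (6*Qf 1 x/qk 1 1 x) \<le> (6305/6027)*Qf 1 x - (25000/885969) * qk 1 1 x"
    by (rule chord2[where a="(7/5)" and b="(147/100)"]) (use Q lo1 loe1 hi1 hie1 in simp_all)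
  have qe2: "qk 2 1 x = (7)*x*x + (-16)*x + (13)" unfolding qk_simps by (simp add: power2_eq_square)
  have lo2: "0 \<le> (-8923/5000)*x*x + (-36077/5000)*x + (21077/5000)"
    by (rule bern[where ua="(3/8)" and ub="(1/2)"]) (use assms in simp_all)
  have loe2: "qk 2 1 x - 6*(121/100)^2*Qf 1 x = (-8923/5000)*x*x + (-36077/5000)*x + (21077/5000)" unfolding Qe qe2 by algebra
  have hi2: "0 \<le> (18067/5000)*x*x + (26933/5000)*x + (-11933/5000)"
    by (rule bern[where ua="(3/8)" and ub="(1/2)"]) (use assms in simp_all)
  have hie2: "6*(133/100)^2*Qf 1 x - qk 2 1 x = (18067/5000)*x*x + (26933/5000)*x + (-11933/5000)" unfolding Qe qe2 by algebra
  have c2: "Qf 1 x * sqrt (6*Qf 1 x/qk 2 1 x) \<le> (2421150/2043811)*Qf 1 x - (250000/6131433) * qk 2 1 x"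
    by (rule chord2[where a="(121/100)" and b="(133/100)"]) (use Q lo2 loe2 hi2 hie2 in simp_all)
  have qe3: "qk 3 1 x = (13)*x*x + (-16)*x + (7)" unfolding qk_simps by (simp add: power2_eq_square)
  have lo3: "0 \<le> (503/50)*x*x + (-653/50)*x + (203/50)"
    by (rule bern[where ua="(3/8)" and ub="(1/2)"]) (use assms in simp_all)
  have loe3: "qk 3 1 x - 6*(7/10)^2*Qf 1 x = (503/50)*x*x + (-653/50)*x + (203/50)" unfolding Qe qe3 by algebra
  have hi3: "0 \<le> (-46277/5000)*x*x + (61277/5000)*x + (-16277/5000)"
    by (rule bern[where ua="(3/8)" and ub="(1/2)"]) (use assms in simp_all)
  have hie3: "6*(79/100)^2*Qf 1 x - qk 3 1 x = (-46277/5000)*x*x + (61277/5000)*x + (-16277/5000)" unfolding Qe qe3 by algebra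
  have c3: "Qf 1 x * sqrt (6*Qf 1 x/qk 3 1 x) \<le> (166710/82397)*Qf 1 x - (50000/247191) * qk 3 1 x"
    by (rule chord2[where a="(7/10)" and b="(79/100)"]) (use Q lo3 loe3 hi3 hie3 in simp_all)
  have qe4: "qk 4 1 x = (13)*x*x + (-10)*x + (4)" unfolding qk_simps by (simp add: power2_eq_square)
  have lo4: "0 \<le> (12983/1250)*x*x + (-9233/1250)*x + (1733/1250)"
    by (rule bern[where ua="(3/8)" and ub="(1/2)"]) (use assms in simp_all)
  have loe4: "qk 4 1 x - 6*(33/50)^2*Qf 1 x = (12983/1250)*x*x + (-9233/1250)*x + (1733/1250)" unfolding Qe qe4 by algebra
  have hi4: "0 \<le> (-6181/625)*x*x + (4306/625)*x + (-556/625)"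
    by (rule bern[where ua="(3/8)" and ub="(1/2)"]) (use assms in simp_all)
  have hie4: "6*(18/25)^2*Qf 1 x - qk 4 1 x = (-6181/625)*x*x + (4306/625)*x + (-556/625)" unfolding Qe qe4 by algebra
  have c4: "Qf 1 x * sqrt (6*Qf 1 x/qk 4 1 x) \<le> (9925/4554)*Qf 1 x - (15625/61479) * qk 4 1 x"
    by (rule chord2[where a="(33/50)" and b="(18/25)"]) (use Q lo4 loe4 hi4 hie4 in simp_all)
  have qe5: "qk 5 1 x = (7)*x*x + (2)*x + (4)" unfolding qk_simps by (simp add: power2_eq_square)
  have lo5: "0 \<le> (-1963/5000)*x*x + (46963/5000)*x + (-16963/5000)"
    by (rule bern[where ua="(3/8)" and ub="(1/2)"]) (use assms in simp_all)
  have loe5: "qk 5 1 x - 6*(111/100)^2*Qf 1 x = (-1963/5000)*x*x + (46963/5000)*x + (-16963/5000)" unfolding Qe qe5 by algebra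
  have hi5: "0 \<le> (1391/625)*x*x + (-7016/625)*x + (3266/625)"
    by (rule bern[where ua="(3/8)" and ub="(1/2)"]) (use assms in simp_all)
  have hie5: "6*(31/25)^2*Qf 1 x - qk 5 1 x = (1391/625)*x*x + (-7016/625)*x + (3266/625)" unfolding Qe qe5 by algebra
  have c5: "Qf 1 x * sqrt (6*Qf 1 x/qk 5 1 x) \<le> (207305/161727)*Qf 1 x - (25000/485181) * qk 5 1 x"
    by (rule chord2[where a="(111/100)" and b="(31/25)"]) (use Q lo5 loe5 hi5 hie5 in simp_all)
  have tot: "0 \<le> (131039462730441252780527554/33129189810117267184793475)*x*x + (-121974730986247868533418179/33129189810117267184793475)*x + (29606753187907786659199429/33129189810117267184793475)"
    by (rule bern[where ua="(3/8)" and ub="(1/2)"]) (use assms in simp_all)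
  have tote: "(-71719540349926786034477/25040959796007004674825) * Qf 1 x + ((125000/3936933) * qk 0 1 x + (25000/885969) * qk 1 1 x + (250000/6131433) * qk 2 1 x + (50000/247191) * qk 3 1 x + (15625/61479) * qk 4 1 x + (25000/485181) * qk 5 1 x) = (131039462730441252780527554/33129189810117267184793475)*x*x + (-121974730986247868533418179/33129189810117267184793475)*x + (29606753187907786659199429/33129189810117267184793475)" unfolding Qe qe0 qe1 qe2 qe3 qe4 qe5 by algebra
  have "Qf 1 x * Sg 1 x \<le> Qf 1 x * (6*(99/100))" unfolding Sg_expand distrib_left using c0 c1 c2 c3 c4 c5 tot tote by linarith
  thus ?thesis using Q by simp
qed

lemma iv6: assumes "(1/2) \<le> x" "x \<le> (5/8)" shows "Sg 1 x \<le> 6*(99/100)"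
proof -
  have Q: "0 < Qf 1 x" by (rule Qf_pos1)
  have Qe: "Qf 1 x = x*x - x + 1" by (simp add: Qf_def power2_eq_square)
  have qe0: "qk 0 1 x = (4)*x*x + (2)*x + (7)" unfolding qk_simps by (simp add: power2_eq_square)
  have lo0: "0 \<le> (-194/25)*x*x + (344/25)*x + (-119/25)"
    by (rule bern[where ua="(1/2)" and ub="(5/8)"]) (use assms in simp_all)
  have loe0: "qk 0 1 x - 6*(7/5)^2*Qf 1 x = (-194/25)*x*x + (344/25)*x + (-119/25)" unfolding Qe qe0 by algebra
  have hi0: "0 \<le> (44827/5000)*x*x + (-74827/5000)*x + (29827/5000)"
    by (rule bern[where ua="(1/2)" and ub="(5/8)"]) (use assms in simp_all)
  have hie0: "6*(147/100)^2*Qf 1 x - qk 0 1 x = (44827/5000)*x*x + (-74827/5000)*x + (29827/5000)" unfolding Qe qe0 by algebra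
  have c0: "Qf 1 x * sqrt (6*Qf 1 x/qk 0 1 x) \<le> (6305/6027)*Qf 1 x - (25000/885969) * qk 0 1 x"
    by (rule chord2[where a="(7/5)" and b="(147/100)"]) (use Q lo0 loe0 hi0 hie0 in simp_all)
  have qe1: "qk 1 1 x = (4)*x*x + (-10)*x + (13)" unfolding qk_simps by (simp add: power2_eq_square)
  have lo1: "0 \<le> (-33067/5000)*x*x + (3067/5000)*x + (11933/5000)"
    by (rule bern[where ua="(1/2)" and ub="(5/8)"]) (use assms in simp_all)
  have loe1: "qk 1 1 x - 6*(133/100)^2*Qf 1 x = (-33067/5000)*x*x + (3067/5000)*x + (11933/5000)" unfolding Qe qe1 by algebra
  have hi1: "0 \<le> (41347/5000)*x*x + (-11347/5000)*x + (-3653/5000)"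
    by (rule bern[where ua="(1/2)" and ub="(5/8)"]) (use assms in simp_all)
  have hie1: "6*(143/100)^2*Qf 1 x - qk 1 1 x = (41347/5000)*x*x + (-11347/5000)*x + (-3653/5000)" unfolding Qe qe1 by algebra
  have c1: "Qf 1 x * sqrt (6*Qf 1 x/qk 1 1 x) \<le> (1428925/1312311)*Qf 1 x - (125000/3936933) * qk 1 1 x"
    by (rule chord2[where a="(133/100)" and b="(143/100)"]) (use Q lo1 loe1 hi1 hie1 in simp_all)
  have qe2: "qk 2 1 x = (7)*x*x + (-16)*x + (13)" unfolding qk_simps by (simp add: power2_eq_square)
  have lo2: "0 \<le> (-1963/5000)*x*x + (-43037/5000)*x + (28037/5000)"
    by (rule bern[where ua="(1/2)" and ub="(5/8)"]) (use assms in simp_all)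
  have loe2: "qk 2 1 x - 6*(111/100)^2*Qf 1 x = (-1963/5000)*x*x + (-43037/5000)*x + (28037/5000)" unfolding Qe qe2 by algebra
  have hi2: "0 \<le> (1391/625)*x*x + (4234/625)*x + (-2359/625)"
    by (rule bern[where ua="(1/2)" and ub="(5/8)"]) (use assms in simp_all)
  have hie2: "6*(31/25)^2*Qf 1 x - qk 2 1 x = (1391/625)*x*x + (4234/625)*x + (-2359/625)" unfolding Qe qe2 by algebra
  have c2: "Qf 1 x * sqrt (6*Qf 1 x/qk 2 1 x) \<le> (207305/161727)*Qf 1 x - (25000/485181) * qk 2 1 x"
    by (rule chord2[where a="(111/100)" and b="(31/25)"]) (use Q lo2 loe2 hi2 hie2 in simp_all)
  have qe3: "qk 3 1 x = (13)*x*x + (-16)*x + (7)" unfolding qk_simps by (simp add: power2_eq_square)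
  have lo3: "0 \<le> (12983/1250)*x*x + (-16733/1250)*x + (5483/1250)"
    by (rule bern[where ua="(1/2)" and ub="(5/8)"]) (use assms in simp_all)
  have loe3: "qk 3 1 x - 6*(33/50)^2*Qf 1 x = (12983/1250)*x*x + (-16733/1250)*x + (5483/1250)" unfolding Qe qe3 by algebra
  have hi3: "0 \<le> (-6181/625)*x*x + (8056/625)*x + (-2431/625)"
    by (rule bern[where ua="(1/2)" and ub="(5/8)"]) (use assms in simp_all)
  have hie3: "6*(18/25)^2*Qf 1 x - qk 3 1 x = (-6181/625)*x*x + (8056/625)*x + (-2431/625)" unfolding Qe qe3 by algebra
  have c3: "Qf 1 x * sqrt (6*Qf 1 x/qk 3 1 x) \<le> (9925/4554)*Qf 1 x - (15625/61479) * qk 3 1 x"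
    by (rule chord2[where a="(33/50)" and b="(18/25)"]) (use Q lo3 loe3 hi3 hie3 in simp_all)
  have qe4: "qk 4 1 x = (13)*x*x + (-10)*x + (4)" unfolding qk_simps by (simp add: power2_eq_square)
  have lo4: "0 \<le> (503/50)*x*x + (-353/50)*x + (53/50)"
    by (rule bern[where ua="(1/2)" and ub="(5/8)"]) (use assms in simp_all)
  have loe4: "qk 4 1 x - 6*(7/10)^2*Qf 1 x = (503/50)*x*x + (-353/50)*x + (53/50)" unfolding Qe qe4 by algebra
  have hi4: "0 \<le> (-46277/5000)*x*x + (31277/5000)*x + (-1277/5000)"
    by (rule bern[where ua="(1/2)" and ub="(5/8)"]) (use assms in simp_all)
  have hie4: "6*(79/100)^2*Qf 1 x - qk 4 1 x = (-46277/5000)*x*x + (31277/5000)*x + (-1277/5000)" unfolding Qe qe4 by algebra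
  have c4: "Qf 1 x * sqrt (6*Qf 1 x/qk 4 1 x) \<le> (166710/82397)*Qf 1 x - (50000/247191) * qk 4 1 x"
    by (rule chord2[where a="(7/10)" and b="(79/100)"]) (use Q lo4 loe4 hi4 hie4 in simp_all)
  have qe5: "qk 5 1 x = (7)*x*x + (2)*x + (4)" unfolding qk_simps by (simp add: power2_eq_square)
  have lo5: "0 \<le> (-8923/5000)*x*x + (53923/5000)*x + (-23923/5000)"
    by (rule bern[where ua="(1/2)" and ub="(5/8)"]) (use assms in simp_all)
  have loe5: "qk 5 1 x - 6*(121/100)^2*Qf 1 x = (-8923/5000)*x*x + (53923/5000)*x + (-23923/5000)" unfolding Qe qe5 by algebra
  have hi5: "0 \<le> (18067/5000)*x*x + (-63067/5000)*x + (33067/5000)"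
    by (rule bern[where ua="(1/2)" and ub="(5/8)"]) (use assms in simp_all)
  have hie5: "6*(133/100)^2*Qf 1 x - qk 5 1 x = (18067/5000)*x*x + (-63067/5000)*x + (33067/5000)" unfolding Qe qe5 by algebra
  have c5: "Qf 1 x * sqrt (6*Qf 1 x/qk 5 1 x) \<le> (2421150/2043811)*Qf 1 x - (250000/6131433) * qk 5 1 x"
    by (rule chord2[where a="(121/100)" and b="(133/100)"]) (use Q lo5 loe5 hi5 hie5 in simp_all)
  have tot: "0 \<le> (131039462730441252780527554/33129189810117267184793475)*x*x + (-140104194474634637027636929/33129189810117267184793475)*x + (5524497847443024415186972/4732741401445323883541925)"
    by (rule bern[where ua="(1/2)" and ub="(5/8)"]) (use assms in simp_all)
  have tote: "(-71719540349926786034477/25040959796007004674825) * Qf 1 x + ((25000/885969) * qk 0 1 x + (125000/3936933) * qk 1 1 x + (25000/485181) * qk 2 1 x + (15625/61479) * qk 3 1 x + (50000/247191) * qk 4 1 x + (250000/6131433) * qk 5 1 x) = (131039462730441252780527554/33129189810117267184793475)*x*x + (-140104194474634637027636929/33129189810117267184793475)*x + (5524497847443024415186972/4732741401445323883541925)" unfolding Qe qe0 qe1 qe2 qe3 qe4 qe5 by algebra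
  have "Qf 1 x * Sg 1 x \<le> Qf 1 x * (6*(99/100))" unfolding Sg_expand distrib_left using c0 c1 c2 c3 c4 c5 tot tote by linarith
  thus ?thesis using Q by simp
qed

lemma iv7: assumes "(5/8) \<le> x" "x \<le> (3/4)" shows "Sg 1 x \<le> 6*(99/100)"
proof -
  have Q: "0 < Qf 1 x" by (rule Qf_pos1)
  have Qe: "Qf 1 x = x*x - x + 1" by (simp add: Qf_def power2_eq_square)
  have qe0: "qk 0 1 x = (4)*x*x + (2)*x + (7)" unfolding qk_simps by (simp add: power2_eq_square)
  have lo0: "0 \<le> (-1723/200)*x*x + (2923/200)*x + (-1123/200)"
    by (rule bern[where ua="(5/8)" and ub="(3/4)"]) (use assms in simp_all)
  have loe0: "qk 0 1 x - 6*(29/20)^2*Qf 1 x = (-1723/200)*x*x + (2923/200)*x + (-1123/200)" unfolding Qe qe0 by algebra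
  have hi0: "0 \<le> (19/2)*x*x + (-31/2)*x + (13/2)"
    by (rule bern[where ua="(5/8)" and ub="(3/4)"]) (use assms in simp_all)
  have hie0: "6*(3/2)^2*Qf 1 x - qk 0 1 x = (19/2)*x*x + (-31/2)*x + (13/2)" unfolding Qe qe0 by algebra
  have c0: "Qf 1 x * sqrt (6*Qf 1 x/qk 0 1 x) \<le> (5222/5133)*Qf 1 x - (400/15399) * qk 0 1 x"
    by (rule chord2[where a="(29/20)" and b="(3/2)"]) (use Q lo0 loe0 hi0 hie0 in simp_all)
  have qe1: "qk 1 1 x = (4)*x*x + (-10)*x + (13)" unfolding qk_simps by (simp add: power2_eq_square)
  have lo1: "0 \<le> (-43/8)*x*x + (-5/8)*x + (29/8)"
    by (rule bern[where ua="(5/8)" and ub="(3/4)"]) (use assms in simp_all)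
  have loe1: "qk 1 1 x - 6*(5/4)^2*Qf 1 x = (-43/8)*x*x + (-5/8)*x + (29/8)" unfolding Qe qe1 by algebra
  have hi1: "0 \<le> (4436/625)*x*x + (-686/625)*x + (-1189/625)"
    by (rule bern[where ua="(5/8)" and ub="(3/4)"]) (use assms in simp_all)
  have hie1: "6*(34/25)^2*Qf 1 x - qk 1 1 x = (4436/625)*x*x + (-686/625)*x + (-1189/625)" unfolding Qe qe1 by algebra
  have c1: "Qf 1 x * sqrt (6*Qf 1 x/qk 1 1 x) \<le> (51121/44370)*Qf 1 x - (500/13311) * qk 1 1 x"
    by (rule chord2[where a="(5/4)" and b="(34/25)"]) (use Q lo1 loe1 hi1 hie1 in simp_all)
  have qe2: "qk 2 1 x = (7)*x*x + (-16)*x + (13)" unfolding qk_simps by (simp add: power2_eq_square)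
  have lo2: "0 \<le> (5597/5000)*x*x + (-50597/5000)*x + (35597/5000)"
    by (rule bern[where ua="(5/8)" and ub="(3/4)"]) (use assms in simp_all)
  have loe2: "qk 2 1 x - 6*(99/100)^2*Qf 1 x = (5597/5000)*x*x + (-50597/5000)*x + (35597/5000)" unfolding Qe qe2 by algebra
  have hi2: "0 \<le> (3307/5000)*x*x + (41693/5000)*x + (-26693/5000)"
    by (rule bern[where ua="(5/8)" and ub="(3/4)"]) (use assms in simp_all)
  have hie2: "6*(113/100)^2*Qf 1 x - qk 2 1 x = (3307/5000)*x*x + (41693/5000)*x + (-26693/5000)" unfolding Qe qe2 by algebra
  have c2: "Qf 1 x * sqrt (6*Qf 1 x/qk 2 1 x) \<le> (843925/592911)*Qf 1 x - (125000/1778733) * qk 2 1 x"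
    by (rule chord2[where a="(99/100)" and b="(113/100)"]) (use Q lo2 loe2 hi2 hie2 in simp_all)
  have qe3: "qk 3 1 x = (13)*x*x + (-16)*x + (7)" unfolding qk_simps by (simp add: power2_eq_square)
  have lo3: "0 \<le> (12983/1250)*x*x + (-16733/1250)*x + (5483/1250)"
    by (rule bern[where ua="(5/8)" and ub="(3/4)"]) (use assms in simp_all)
  have loe3: "qk 3 1 x - 6*(33/50)^2*Qf 1 x = (12983/1250)*x*x + (-16733/1250)*x + (5483/1250)" unfolding Qe qe3 by algebra
  have hi3: "0 \<le> (-503/50)*x*x + (653/50)*x + (-203/50)"
    by (rule bern[where ua="(5/8)" and ub="(3/4)"]) (use assms in simp_all)
  have hie3: "6*(7/10)^2*Qf 1 x - qk 3 1 x = (-503/50)*x*x + (653/50)*x + (-203/50)" unfolding Qe qe3 by algebra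
  have c3: "Qf 1 x * sqrt (6*Qf 1 x/qk 3 1 x) \<le> (17345/7854)*Qf 1 x - (3125/11781) * qk 3 1 x"
    by (rule chord2[where a="(33/50)" and b="(7/10)"]) (use Q lo3 loe3 hi3 hie3 in simp_all)
  have qe4: "qk 4 1 x = (13)*x*x + (-10)*x + (4)" unfolding qk_simps by (simp add: power2_eq_square)
  have lo4: "0 \<le> (11687/1250)*x*x + (-7937/1250)*x + (437/1250)"
    by (rule bern[where ua="(5/8)" and ub="(3/4)"]) (use assms in simp_all)
  have loe4: "qk 4 1 x - 6*(39/50)^2*Qf 1 x = (11687/1250)*x*x + (-7937/1250)*x + (437/1250)" unfolding Qe qe4 by algebra
  have hi4: "0 \<le> (-41237/5000)*x*x + (26237/5000)*x + (3763/5000)"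
    by (rule bern[where ua="(5/8)" and ub="(3/4)"]) (use assms in simp_all)
  have hie4: "6*(89/100)^2*Qf 1 x - qk 4 1 x = (-41237/5000)*x*x + (26237/5000)*x + (3763/5000)" unfolding Qe qe4 by algebra
  have c4: "Qf 1 x * sqrt (6*Qf 1 x/qk 4 1 x) \<le> (1047350/579657)*Qf 1 x - (250000/1738971) * qk 4 1 x"
    by (rule chord2[where a="(39/50)" and b="(89/100)"]) (use Q lo4 loe4 hi4 hie4 in simp_all)
  have qe5: "qk 5 1 x = (7)*x*x + (2)*x + (4)" unfolding qk_simps by (simp add: power2_eq_square)
  have lo5: "0 \<le> (-16483/5000)*x*x + (61483/5000)*x + (-31483/5000)"
    by (rule bern[where ua="(5/8)" and ub="(3/4)"]) (use assms in simp_all)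
  have loe5: "qk 5 1 x - 6*(131/100)^2*Qf 1 x = (-16483/5000)*x*x + (61483/5000)*x + (-31483/5000)" unfolding Qe qe5 by algebra
  have hi5: "0 \<le> (119/25)*x*x + (-344/25)*x + (194/25)"
    by (rule bern[where ua="(5/8)" and ub="(3/4)"]) (use assms in simp_all)
  have hie5: "6*(7/5)^2*Qf 1 x - qk 5 1 x = (119/25)*x*x + (-344/25)*x + (194/25)" unfolding Qe qe5 by algebra
  have c5: "Qf 1 x * sqrt (6*Qf 1 x/qk 5 1 x) \<le> (275505/248507)*Qf 1 x - (25000/745521) * qk 5 1 x"
    by (rule chord2[where a="(131/100)" and b="(7/5)"]) (use Q lo5 loe5 hi5 hie5 in simp_all)
  have tot: "0 \<le> (48599417997340794998389/13801479505764141541350)*x*x + (-177459269531311714958917/41404438517292424624050)*x + (8120866429544905310381/5914919788184632089150)"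
    by (rule bern[where ua="(5/8)" and ub="(3/4)"]) (use assms in simp_all)
  have tote: "(-2254320521793970059433/811851735633184796550) * Qf 1 x + ((400/15399) * qk 0 1 x + (500/13311) * qk 1 1 x + (125000/1778733) * qk 2 1 x + (3125/11781) * qk 3 1 x + (250000/1738971) * qk 4 1 x + (25000/745521) * qk 5 1 x) = (48599417997340794998389/13801479505764141541350)*x*x + (-177459269531311714958917/41404438517292424624050)*x + (8120866429544905310381/5914919788184632089150)" unfolding Qe qe0 qe1 qe2 qe3 qe4 qe5 by algebra
  have "Qf 1 x * Sg 1 x \<le> Qf 1 x * (6*(99/100))" unfolding Sg_expand distrib_left using c0 c1 c2 c3 c4 c5 tot tote by linarith
  thus ?thesis using Q by simp
qed

lemma iv8: assumes "(3/4) \<le> x" "x \<le> (1)" shows "Sg 1 x \<le> 6*(99/100)"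
proof -
  have Q: "0 < Qf 1 x" by (rule Qf_pos1)
  have Qe: "Qf 1 x = x*x - x + 1" by (simp add: Qf_def power2_eq_square)
  have qe0: "qk 0 1 x = (4)*x*x + (2)*x + (7)" unfolding qk_simps by (simp add: power2_eq_square)
  have lo0: "0 \<le> (-10987/1250)*x*x + (18487/1250)*x + (-7237/1250)"
    by (rule bern[where ua="(3/4)" and ub="(1)"]) (use assms in simp_all)
  have loe0: "qk 0 1 x - 6*(73/50)^2*Qf 1 x = (-10987/1250)*x*x + (18487/1250)*x + (-7237/1250)" unfolding Qe qe0 by algebra
  have hi0: "0 \<le> (19/2)*x*x + (-31/2)*x + (13/2)"
    by (rule bern[where ua="(3/4)" and ub="(1)"]) (use assms in simp_all)
  have hie0: "6*(3/2)^2*Qf 1 x - qk 0 1 x = (19/2)*x*x + (-31/2)*x + (13/2)" unfolding Qe qe0 by algebra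
  have c0: "Qf 1 x * sqrt (6*Qf 1 x/qk 0 1 x) \<le> (16429/16206)*Qf 1 x - (625/24309) * qk 0 1 x"
    by (rule chord2[where a="(73/50)" and b="(3/2)"]) (use Q lo0 loe0 hi0 hie0 in simp_all)
  have qe1: "qk 1 1 x = (4)*x*x + (-10)*x + (13)" unfolding qk_simps by (simp add: power2_eq_square)
  have lo1: "0 \<le> (-14347/5000)*x*x + (-15653/5000)*x + (30653/5000)"
    by (rule bern[where ua="(3/4)" and ub="(1)"]) (use assms in simp_all)
  have loe1: "qk 1 1 x - 6*(107/100)^2*Qf 1 x = (-14347/5000)*x*x + (-15653/5000)*x + (30653/5000)" unfolding Qe qe1 by algebra
  have hi1: "0 \<le> (28387/5000)*x*x + (1613/5000)*x + (-16613/5000)"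
    by (rule bern[where ua="(3/4)" and ub="(1)"]) (use assms in simp_all)
  have hie1: "6*(127/100)^2*Qf 1 x - qk 1 1 x = (28387/5000)*x*x + (1613/5000)*x + (-16613/5000)" unfolding Qe qe1 by algebra
  have c1: "Qf 1 x * sqrt (6*Qf 1 x/qk 1 1 x) \<le> (2058350/1589913)*Qf 1 x - (250000/4769739) * qk 1 1 x"
    by (rule chord2[where a="(107/100)" and b="(127/100)"]) (use Q lo1 loe1 hi1 hie1 in simp_all)
  have qe2: "qk 2 1 x = (7)*x*x + (-16)*x + (13)" unfolding qk_simps by (simp add: power2_eq_square)
  have lo2: "0 \<le> (15317/5000)*x*x + (-60317/5000)*x + (45317/5000)"
    by (rule bern[where ua="(3/4)" and ub="(1)"]) (use assms in simp_all)
  have loe2: "qk 2 1 x - 6*(81/100)^2*Qf 1 x = (15317/5000)*x*x + (-60317/5000)*x + (45317/5000)" unfolding Qe qe2 by algebra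
  have hi2: "0 \<le> (-947/1250)*x*x + (12197/1250)*x + (-8447/1250)"
    by (rule bern[where ua="(3/4)" and ub="(1)"]) (use assms in simp_all)
  have hie2: "6*(51/50)^2*Qf 1 x - qk 2 1 x = (-947/1250)*x*x + (12197/1250)*x + (-8447/1250)" unfolding Qe qe2 by algebra
  have c2: "Qf 1 x * sqrt (6*Qf 1 x/qk 2 1 x) \<le> (140150/83997)*Qf 1 x - (250000/2267919) * qk 2 1 x"
    by (rule chord2[where a="(81/100)" and b="(51/50)"]) (use Q lo2 loe2 hi2 hie2 in simp_all)
  have qe3: "qk 3 1 x = (13)*x*x + (-16)*x + (7)" unfolding qk_simps by (simp add: power2_eq_square)
  have lo3: "0 \<le> (6391/625)*x*x + (-8266/625)*x + (2641/625)"
    by (rule bern[where ua="(3/4)" and ub="(1)"]) (use assms in simp_all)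
  have loe3: "qk 3 1 x - 6*(17/25)^2*Qf 1 x = (6391/625)*x*x + (-8266/625)*x + (2641/625)" unfolding Qe qe3 by algebra
  have hi3: "0 \<le> (-44333/5000)*x*x + (59333/5000)*x + (-14333/5000)"
    by (rule bern[where ua="(3/4)" and ub="(1)"]) (use assms in simp_all)
  have hie3: "6*(83/100)^2*Qf 1 x - qk 3 1 x = (-44333/5000)*x*x + (59333/5000)*x + (-14333/5000)" unfolding Qe qe3 by algebra
  have c3: "Qf 1 x * sqrt (6*Qf 1 x/qk 3 1 x) \<le> (428925/213061)*Qf 1 x - (125000/639183) * qk 3 1 x"
    by (rule chord2[where a="(17/25)" and b="(83/100)"]) (use Q lo3 loe3 hi3 hie3 in simp_all)
  have qe4: "qk 4 1 x = (13)*x*x + (-10)*x + (4)" unfolding qk_simps by (simp add: power2_eq_square)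
  have lo4: "0 \<le> (42293/5000)*x*x + (-27293/5000)*x + (-2707/5000)"
    by (rule bern[where ua="(3/4)" and ub="(1)"]) (use assms in simp_all)
  have loe4: "qk 4 1 x - 6*(87/100)^2*Qf 1 x = (42293/5000)*x*x + (-27293/5000)*x + (-2707/5000)" unfolding Qe qe4 by algebra
  have hi4: "0 \<le> (-29357/5000)*x*x + (14357/5000)*x + (15643/5000)"
    by (rule bern[where ua="(3/4)" and ub="(1)"]) (use assms in simp_all)
  have hie4: "6*(109/100)^2*Qf 1 x - qk 4 1 x = (-29357/5000)*x*x + (14357/5000)*x + (15643/5000)" unfolding Qe qe4 by algebra
  have c4: "Qf 1 x * sqrt (6*Qf 1 x/qk 4 1 x) \<le> (723325/464667)*Qf 1 x - (125000/1394001) * qk 4 1 x"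
    by (rule chord2[where a="(87/100)" and b="(109/100)"]) (use Q lo4 loe4 hi4 hie4 in simp_all)
  have qe5: "qk 5 1 x = (7)*x*x + (2)*x + (4)" unfolding qk_simps by (simp add: power2_eq_square)
  have lo5: "0 \<le> (-5533/1250)*x*x + (16783/1250)*x + (-9283/1250)"
    by (rule bern[where ua="(3/4)" and ub="(1)"]) (use assms in simp_all)
  have loe5: "qk 5 1 x - 6*(69/50)^2*Qf 1 x = (-5533/1250)*x*x + (16783/1250)*x + (-9283/1250)" unfolding Qe qe5 by algebra
  have hi5: "0 \<le> (3839/625)*x*x + (-9464/625)*x + (5714/625)"
    by (rule bern[where ua="(3/4)" and ub="(1)"]) (use assms in simp_all)
  have hie5: "6*(37/25)^2*Qf 1 x - qk 5 1 x = (3839/625)*x*x + (-9464/625)*x + (5714/625)" unfolding Qe qe5 by algebra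
  have c5: "Qf 1 x * sqrt (6*Qf 1 x/qk 5 1 x) \<le> (383575/365079)*Qf 1 x - (31250/1095237) * qk 5 1 x"
    by (rule chord2[where a="(69/50)" and b="(37/25)"]) (use Q lo5 loe5 hi5 hie5 in simp_all)
  have tot: "0 \<le> (33973675897810338146918336/14552859698567647737646275)*x*x + (-961989217506967047224725832/271158385812086987438184675)*x + (19647884067985547027045362643/13286760904792262384471049075)"
    by (rule bern[where ua="(3/4)" and ub="(1)"]) (use assms in simp_all)
  have tote: "(-1307699816194709169146380666/492102255733046754980409225) * Qf 1 x + ((625/24309) * qk 0 1 x + (250000/4769739) * qk 1 1 x + (250000/2267919) * qk 2 1 x + (125000/639183) * qk 3 1 x + (125000/1394001) * qk 4 1 x + (31250/1095237) * qk 5 1 x) = (33973675897810338146918336/14552859698567647737646275)*x*x + (-961989217506967047224725832/271158385812086987438184675)*x + (19647884067985547027045362643/13286760904792262384471049075)" unfolding Qe qe0 qe1 qe2 qe3 qe4 qe5 by algebra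
  have "Qf 1 x * Sg 1 x \<le> Qf 1 x * (6*(99/100))" unfolding Sg_expand distrib_left using c0 c1 c2 c3 c4 c5 tot tote by linarith
  thus ?thesis using Q by simp
qed

lemma Sg_unit: assumes "-1 \<le> x" "x \<le> 1" shows "Sg 1 x \<le> 6*(99/100)"
proof -
  have "x \<le> -1/2 \<or> (-1/2 \<le> x \<and> x \<le> -1/4) \<or> (-1/4 \<le> x \<and> x \<le> 0) \<or> (0 \<le> x \<and> x \<le> 1/4)
    \<or> (1/4 \<le> x \<and> x \<le> 3/8) \<or> (3/8 \<le> x \<and> x \<le> 1/2) \<or> (1/2 \<le> x \<and> x \<le> 5/8)
    \<or> (5/8 \<le> x \<and> x \<le> 3/4) \<or> 3/4 \<le> x" by linarith
  hence "(-1 \<le> x \<and> x \<le> -1/2) \<or> (-1/2 \<le> x \<and> x \<le> -1/4) \<or> (-1/4 \<le> x \<and> x \<le> 0) \<or> (0 \<le> x \<and> x \<le> 1/4)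
    \<or> (1/4 \<le> x \<and> x \<le> 3/8) \<or> (3/8 \<le> x \<and> x \<le> 1/2) \<or> (1/2 \<le> x \<and> x \<le> 5/8)
    \<or> (5/8 \<le> x \<and> x \<le> 3/4) \<or> (3/4 \<le> x \<and> x \<le> 1)" using assms by linarith
  thus ?thesis
  proof (elim disjE conjE)
    assume "-1 \<le> x" "x \<le> -1/2" thus ?thesis by (rule iv0)
  next
    assume "-1/2 \<le> x" "x \<le> -1/4" thus ?thesis by (rule iv1)
  next
    assume "-1/4 \<le> x" "x \<le> 0" thus ?thesis by (rule iv2)
  next
    assume "0 \<le> x" "x \<le> 1/4" thus ?thesis by (rule iv3)
  next
    assume "1/4 \<le> x" "x \<le> 3/8" thus ?thesis by (rule iv4)
  next
    assume "3/8 \<le> x" "x \<le> 1/2" thus ?thesis by (rule iv5)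
  next
    assume "1/2 \<le> x" "x \<le> 5/8" thus ?thesis by (rule iv6)
  next
    assume "5/8 \<le> x" "x \<le> 3/4" thus ?thesis by (rule iv7)
  next
    assume "3/4 \<le> x" "x \<le> 1" thus ?thesis by (rule iv8)
  qed
qed

lemma Qf_pos: assumes "s \<noteq> 0 \<or> t \<noteq> 0" shows "0 < Qf s t"
proof -
  have e: "Qf s t = (s - t/2)^2 + 3/4*t^2" by (simp add: Qf_def power2_eq_square algebra_simps)
  show ?thesis
  proof (cases "t = 0")
    case True thus ?thesis using assms by (simp add: Qf_def)
  next
    case False
    hence "0 < 3/4*t^2" by simp
    moreover have "0 \<le> (s - t/2)^2" by simp
    ultimately show ?thesis unfolding e by linarith
  qed
qed

lemma Sg_homog: assumes "s \<noteq> 0" shows "Sg s t = Sg 1 (t/s)"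
proof -
  have Q: "Qf s t = s^2 * Qf 1 (t/s)" using assms by (simp add: Qf_def power2_eq_square field_simps)
  have q: "qk k s t = s^2 * qk k 1 (t/s)" for k
    using assms by (simp add: qk_def power2_eq_square field_simps split: prod.splits)
  have "6 * Qf s t / qk k s t = 6 * Qf 1 (t/s) / qk k 1 (t/s)" for k
    unfolding Q q using assms by simp
  thus ?thesis unfolding Sg_def by simp
qed

lemma Sg_swap: "Sg s t = Sg t s"
proof -
  have Q: "Qf t s = Qf s t" by (simp add: Qf_def algebra_simps)
  have q: "qk 0 t s = qk 5 s t" "qk 1 t s = qk 4 s t" "qk 2 t s = qk 3 s t"
          "qk 3 t s = qk 2 s t" "qk 4 t s = qk 1 s t" "qk 5 t s = qk 0 s t"
    unfolding qk_simps by (simp_all add: algebra_simps)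
  show ?thesis unfolding Sg_expand Q q by simp
qed

lemma Sg_bound: assumes "s \<noteq> 0 \<or> t \<noteq> 0" shows "Sg s t \<le> 6*(99/100)"
proof (cases "\<bar>t\<bar> \<le> \<bar>s\<bar>")
  case True
  hence s0: "s \<noteq> 0" using assms by auto
  have "\<bar>t\<bar>/\<bar>s\<bar> \<le> 1" using True s0 by (simp add: divide_le_eq)
  hence "\<bar>t/s\<bar> \<le> 1" by (simp add: abs_divide)
  hence "-1 \<le> t/s" "t/s \<le> 1" by linarith+
  thus ?thesis unfolding Sg_homog[OF s0] by (rule Sg_unit)
next
  case False
  hence t0: "t \<noteq> 0" by auto
  have "\<bar>s\<bar>/\<bar>t\<bar> \<le> 1" using False t0 by (simp add: divide_le_eq)
  hence "\<bar>s/t\<bar> \<le> 1" by (simp add: abs_divide)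
  hence "-1 \<le> s/t" "s/t \<le> 1" by linarith+
  thus ?thesis unfolding Sg_swap[of s t] Sg_homog[OF t0] by (rule Sg_unit)
qed


definition cr :: "complex \<Rightarrow> complex \<Rightarrow> complex \<Rightarrow> real" where
  "cr u v w = Im (cnj (v - u) * (w - u))"

definition Ssq :: "complex \<Rightarrow> complex \<Rightarrow> complex \<Rightarrow> real" where
  "Ssq u v w = cmod (u - v)^2 + cmod (v - w)^2 + cmod (w - u)^2"

definition L2 :: "complex \<Rightarrow> complex \<Rightarrow> complex \<Rightarrow> real" where
  "L2 A B C = max (cmod (B - A)^2) (max (cmod (C - B)^2) (cmod (A - C)^2))"

definition Pc :: "complex \<Rightarrow> complex \<Rightarrow> complex \<Rightarrow> complex \<Rightarrow> bool" where
  "Pc A B C p \<longleftrightarrow> 0 \<le> Re p \<and> Re p \<le> 1/2 \<and> 0 \<le> Im p \<and> cmod (p - 1) \<le> 1 \<and>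
            (\<exists>f. similitude f \<and> f ` {A, B, C} = {0, 1, p})"

lemma char_point_eq: "char_point (A, B, C) = (THE p. Pc A B C p)"
  by (simp add: char_point_def Pc_def)

lemma cnj_mult_self: "cnj a * a = complex_of_real (cmod a ^ 2)"
  by (metis complex_norm_square mult.commute)

lemma Im_ofreal_mult: "Im (complex_of_real r * z) = r * Im z" by simp

lemma Im_cnj: "Im (cnj z) = - Im z" by simp

lemma sim_scale:
  assumes "similitude f"
  obtains a where "a \<noteq> 0" "\<And>z w. cmod (f z - f w) = cmod a * cmod (z - w)"
    "\<And>u v w. \<bar>cr (f u) (f v) (f w)\<bar> = cmod a ^ 2 * \<bar>cr u v w\<bar>"
    "inj f"
proof -
  obtain a b where ab: "a \<noteq> 0" "(\<forall>z. f z = a * z + b) \<or> (\<forall>z. f z = a * cnj z + b)"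
    using assms unfolding similitude_def by blast
  from ab(2) show ?thesis
  proof
    assume f: "\<forall>z. f z = a * z + b"
    have d: "f z - f w = a * (z - w)" for z w using f by (simp add: algebra_simps)
    have c: "cr (f u) (f v) (f w) = cmod a ^ 2 * cr u v w" for u v w
    proof -
      have "cnj (f v - f u) * (f w - f u) = (cnj a * a) * (cnj (v - u) * (w - u))"
        unfolding d by (simp add: algebra_simps)
      thus ?thesis unfolding cr_def cnj_mult_self by simp
    qed
    have "inj f" unfolding inj_def using d ab(1) by (metis eq_iff_diff_eq_0 mult_eq_0_iff)
    show ?thesis
      by (rule that[OF ab(1)]) (use d c \<open>inj f\<close> in \<open>auto simp: norm_mult abs_mult\<close>)
  next
    assume f: "\<forall>z. f z = a * cnj z + b"
    have d: "f z - f w = a * cnj (z - w)" for z w using f by (simp add: algebra_simps)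
    have c: "cr (f u) (f v) (f w) = -(cmod a ^ 2) * cr u v w" for u v w
    proof -
      have "cnj (f v - f u) * (f w - f u) = (cnj a * a) * cnj (cnj (v - u) * (w - u))"
        unfolding d by (simp add: algebra_simps)
      hence "cr (f u) (f v) (f w) = Im (complex_of_real (cmod a ^ 2) * cnj (cnj (v - u) * (w - u)))"
        unfolding cr_def cnj_mult_self by simp_all
      also have "\<dots> = cmod a ^ 2 * Im (cnj (cnj (v - u) * (w - u)))" by (rule Im_ofreal_mult)
      also have "\<dots> = -(cmod a ^ 2) * cr u v w" unfolding cr_def by (simp only: Im_cnj)
      finally show ?thesis .
    qed
    have "inj f" unfolding inj_def using d ab(1)
      by (metis complex_cnj_zero_iff eq_iff_diff_eq_0 mult_eq_0_iff)
    show ?thesis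
      by (rule that[OF ab(1)]) (use d c \<open>inj f\<close> in \<open>auto simp: norm_mult abs_mult simp del: complex_cnj_diff\<close>)
  qed
qed

lemma perm3:
  assumes "X1 \<in> {A,B,C}" "X2 \<in> {A,B,C}" "X3 \<in> {A,B,C}" "X1 \<noteq> X2" "X2 \<noteq> X3" "X1 \<noteq> X3"
  shows "\<bar>cr X1 X2 X3\<bar> = \<bar>cr A B C\<bar> \<and> Ssq X1 X2 X3 = Ssq A B C"
proof -
  have n: "cmod (x - y) = cmod (y - x)" for x y :: complex by (rule norm_minus_commute)
  have c1: "cr B A C = - cr A B C" "cr A C B = - cr A B C" "cr C B A = - cr A B C"
    "cr B C A = cr A B C" "cr C A B = cr A B C"
    unfolding cr_def by (simp_all add: algebra_simps)
  show ?thesis using assms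
    by (auto simp: c1 Ssq_def n[of A B] n[of B C] n[of A C] algebra_simps)
qed

lemma pair_le_L2: "z \<in> {A,B,C} \<Longrightarrow> w \<in> {A,B,C} \<Longrightarrow> cmod (z - w)^2 \<le> L2 A B C"
  unfolding L2_def by (auto simp: norm_minus_commute max_def)


lemma cr_01: "cr 0 1 p = Im p" by (simp add: cr_def)

lemma Pc_bounds:
  assumes "Pc A B C p"
  shows "cmod p \<le> 1" "cmod (p - 1) \<le> 1" "cmod p \<le> cmod (p - 1)"
proof -
  have r: "0 \<le> Re p" "Re p \<le> 1/2" "cmod (p - 1) \<le> 1" using assms unfolding Pc_def by auto
  have e1: "cmod p ^ 2 = Re p ^ 2 + Im p ^ 2" by (simp add: cmod_power2)
  have e2: "cmod (p - 1) ^ 2 = (Re p - 1) ^ 2 + Im p ^ 2" by (simp add: cmod_power2)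
  have "cmod (p - 1) ^ 2 \<le> 1" using r(3) by (simp add: power_le_one)
  hence a: "cmod p ^ 2 \<le> 1" using e1 e2 r by (simp add: power2_eq_square algebra_simps)
  have b: "cmod p ^ 2 \<le> cmod (p - 1) ^ 2" using e1 e2 r by (simp add: power2_eq_square algebra_simps)
  show "cmod p \<le> 1" using a by (simp add: power_le_one_iff)
  show "cmod (p - 1) \<le> 1" by (rule r(3))
  show "cmod p \<le> cmod (p - 1)" using b by (simp add: power2_le_iff_abs_le)
qed

lemma img_dist:
  assumes "Pc A B C p" "x \<in> {0, 1, p}" "y \<in> {0, 1, p}"
  shows "cmod (x - y) \<le> 1"
proof -
  note b = Pc_bounds[OF assms(1)]
  have "cmod (1 - p) \<le> 1" using b by (simp add: norm_minus_commute)
  thus ?thesis using assms(2,3) b by auto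
qed

lemma L2_pos: assumes "nondeg (A,B,C)" shows "0 < L2 A B C"
proof -
  have "A \<noteq> B \<or> B \<noteq> C" using assms by (simp add: nondeg_def)
  thus ?thesis unfolding L2_def by (auto simp: less_max_iff_disj)
qed

lemma sat_analysis:
  assumes nd: "nondeg (A,B,C)" and P: "Pc A B C p"
  shows "0 \<le> Im p \<and> Im p * L2 A B C \<le> \<bar>cr A B C\<bar>"
    and "A \<noteq> B \<and> B \<noteq> C \<and> A \<noteq> C \<Longrightarrow>
           Im p * L2 A B C = \<bar>cr A B C\<bar> \<and> (cmod p ^ 2 + cmod (p - 1) ^ 2 + 1) * L2 A B C = Ssq A B C"
    and "\<not> (A \<noteq> B \<and> B \<noteq> C \<and> A \<noteq> C) \<Longrightarrow> p = 0"
proof -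
  obtain f where sim: "similitude f" and img: "f ` {A,B,C} = {0,1,p}"
    using P unfolding Pc_def by blast
  obtain a where a0: "a \<noteq> 0" and dist: "\<And>z w. cmod (f z - f w) = cmod a * cmod (z - w)"
    and crs: "\<And>u v w. \<bar>cr (f u) (f v) (f w)\<bar> = cmod a ^ 2 * \<bar>cr u v w\<bar>" and inj: "inj f"
    using sim_scale[OF sim] by blast
  have rp: "0 \<le> Re p" "Re p \<le> 1/2" "0 \<le> Im p" using P unfolding Pc_def by auto
  obtain X1 where X1: "X1 \<in> {A,B,C}" "f X1 = 0" using img by (metis imageE insertI1)
  obtain X2 where X2: "X2 \<in> {A,B,C}" "f X2 = 1" using img by (metis imageE insertI1 insertI2)
  obtain X3 where X3: "X3 \<in> {A,B,C}" "f X3 = p" using img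
    by (metis (no_types, lifting) imageE insertI1 insertI2)
  have db: "cmod a ^ 2 * cmod (z - w) ^ 2 \<le> 1" if "z \<in> {A,B,C}" "w \<in> {A,B,C}" for z w
  proof -
    have "f z \<in> {0,1,p}" "f w \<in> {0,1,p}" using img that by blast+
    hence "cmod (f z - f w) \<le> 1" by (rule img_dist[OF P])
    hence "cmod a * cmod (z - w) \<le> 1" using dist by simp
    hence "(cmod a * cmod (z - w))^2 \<le> 1" by (simp add: power_le_one)
    thus ?thesis by (simp add: power_mult_distrib)
  qed
  have aL: "cmod a ^ 2 * L2 A B C \<le> 1"
    unfolding L2_def using db[of B A] db[of C B] db[of A C] by (auto simp: max_def)
  have X12: "cmod a ^ 2 * cmod (X2 - X1) ^ 2 = 1"
  proof -
    have "cmod (f X2 - f X1) = 1" using X1 X2 by simp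
    hence "cmod a * cmod (X2 - X1) = 1" using dist by simp
    thus ?thesis by (metis power_mult_distrib power_one)
  qed
  have "cmod (X2 - X1) ^ 2 \<le> L2 A B C" by (rule pair_le_L2[OF X2(1) X1(1)])
  hence "1 \<le> cmod a ^ 2 * L2 A B C" using X12 by (metis mult_left_mono zero_le_power2)
  hence aL1: "cmod a ^ 2 * L2 A B C = 1" using aL by linarith
  have Imp: "Im p = cmod a ^ 2 * \<bar>cr X1 X2 X3\<bar>"
  proof -
    have "\<bar>cr (f X1) (f X2) (f X3)\<bar> = \<bar>Im p\<bar>" using X1 X2 X3 by (simp add: cr_01)
    thus ?thesis using crs rp(3) by simp
  qed
  have X1X2: "X1 \<noteq> X2" using X1 X2 by auto
  have p1: "p \<noteq> 1" using rp by auto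
  have X3X2: "X3 \<noteq> X2" using X2 X3 p1 by auto
  have deg: "X3 = X1 \<Longrightarrow> p = 0" using X1 X3 by simp
  have crdeg: "cr X1 X2 X1 = 0" by (simp add: cr_def)
  have distinct_case: "Im p * L2 A B C = \<bar>cr A B C\<bar> \<and> (cmod p ^ 2 + cmod (p - 1) ^ 2 + 1) * L2 A B C = Ssq A B C"
    if X31: "X3 \<noteq> X1"
  proof -
    have pm: "\<bar>cr X1 X2 X3\<bar> = \<bar>cr A B C\<bar> \<and> Ssq X1 X2 X3 = Ssq A B C"
      by (rule perm3) (use X1 X2 X3 X1X2 X3X2 X31 in auto)
    have "Im p * L2 A B C = \<bar>cr A B C\<bar>" using Imp pm aL1 by (metis mult.commute mult.left_commute mult_1)
    moreover have "Ssq (f X1) (f X2) (f X3) = cmod a ^ 2 * Ssq X1 X2 X3"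
      unfolding Ssq_def dist by (simp add: power_mult_distrib algebra_simps)
    moreover have "Ssq (f X1) (f X2) (f X3) = cmod p ^ 2 + cmod (p - 1) ^ 2 + 1"
      using X1 X2 X3 by (simp add: Ssq_def norm_minus_commute)
    ultimately show ?thesis using pm aL1 by (metis mult.commute mult.left_commute mult_1)
  qed
  show "0 \<le> Im p \<and> Im p * L2 A B C \<le> \<bar>cr A B C\<bar>"
  proof (cases "X3 = X1")
    case True
    thus ?thesis using deg by simp
  next
    case False thus ?thesis using distinct_case rp by simp
  qed
  show "A \<noteq> B \<and> B \<noteq> C \<and> A \<noteq> C \<Longrightarrow>
           Im p * L2 A B C = \<bar>cr A B C\<bar> \<and> (cmod p ^ 2 + cmod (p - 1) ^ 2 + 1) * L2 A B C = Ssq A B C"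
  proof -
    assume dABC: "A \<noteq> B \<and> B \<noteq> C \<and> A \<noteq> C"
    have "X3 \<noteq> X1"
    proof
      assume "X3 = X1"
      hence "p = 0" by (rule deg)
      hence "f A \<in> {0,1}" "f B \<in> {0,1}" "f C \<in> {0,1}" using img by blast+
      hence "f A = f B \<or> f B = f C \<or> f A = f C" by auto
      thus False using inj dABC by (auto dest: injD)
    qed
    thus ?thesis by (rule distinct_case)
  qed
  show "\<not> (A \<noteq> B \<and> B \<noteq> C \<and> A \<noteq> C) \<Longrightarrow> p = 0"
  proof -
    assume nd3: "\<not> (A \<noteq> B \<and> B \<noteq> C \<and> A \<noteq> C)"
    have "X3 = X1"
    proof (rule ccontr)
      assume "X3 \<noteq> X1"
      thus False using X1 X2 X3 X1X2 X3X2 nd3 by auto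
    qed
    thus ?thesis by (rule deg)
  qed
qed

lemma Pc_unique:
  assumes nd: "nondeg (A,B,C)" and P: "Pc A B C p" and Q: "Pc A B C q"
  shows "p = q"
proof (cases "A \<noteq> B \<and> B \<noteq> C \<and> A \<noteq> C")
  case False
  thus ?thesis using sat_analysis(3)[OF nd P] sat_analysis(3)[OF nd Q] by simp
next
  case True
  have L: "0 < L2 A B C" by (rule L2_pos[OF nd])
  note sp = sat_analysis(2)[OF nd P True] and sq = sat_analysis(2)[OF nd Q True]
  have im: "Im p = Im q" using sp sq L by (metis mult_right_cancel less_irrefl)
  have s: "cmod p ^ 2 + cmod (p - 1) ^ 2 = cmod q ^ 2 + cmod (q - 1) ^ 2"
    using sp sq L by (metis add_right_cancel mult_right_cancel less_irrefl)
  have e: "cmod z ^ 2 + cmod (z - 1) ^ 2 = 2 * Re z ^ 2 - 2 * Re z + 1 + 2 * Im z ^ 2" for z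
    unfolding cmod_power2 by (simp add: power2_eq_square algebra_simps)
  have "Re p ^ 2 - Re p = Re q ^ 2 - Re q"
    using s im e[of p] e[of q] by simp
  hence f: "(Re p - Re q) * (Re p + Re q - 1) = 0" by (simp add: power2_eq_square algebra_simps)
  have rp: "Re p \<le> 1/2" "Re q \<le> 1/2" using P Q unfolding Pc_def by auto
  have "Re p = Re q"
  proof (rule ccontr)
    assume "Re p \<noteq> Re q"
    hence "Re p + Re q = 1" using f by simp
    thus False using rp \<open>Re p \<noteq> Re q\<close> by linarith
  qed
  thus ?thesis using im by (simp add: complex_eq_iff)
qed



lemma ex_core:
  assumes UV: "U \<noteq> V" and o1: "cmod (W - U) \<le> cmod (W - V)" and o2: "cmod (W - V) \<le> cmod (V - U)"
    and S: "{U, V, W} = {A, B, C}"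
  shows "\<exists>p. Pc A B C p"
proof -
  define d where "d = V - U"
  have d0: "d \<noteq> 0" using UV by (simp add: d_def)
  define w where "w = (W - U) / d"
  have w1: "w - 1 = (W - V) / d" using d0 by (simp add: w_def d_def field_simps)
  have n1: "cmod w \<le> cmod (w - 1)" using o1 d0 unfolding w1 by (simp add: w_def norm_divide divide_right_mono)
  have n2: "cmod (w - 1) \<le> 1" using o2 d0 unfolding w1 by (simp add: d_def norm_divide divide_le_eq_1)
  have e1: "cmod w ^ 2 = Re w ^ 2 + Im w ^ 2" by (simp add: cmod_power2)
  have e2: "cmod (w - 1) ^ 2 = (Re w - 1) ^ 2 + Im w ^ 2" by (simp add: cmod_power2)
  have "cmod w ^ 2 \<le> cmod (w - 1) ^ 2" using n1 by (simp add: power_mono)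
  hence r1: "Re w \<le> 1/2" using e1 e2 by (simp add: power2_eq_square algebra_simps)
  have "cmod (w - 1) ^ 2 \<le> 1" using n2 by (simp add: power_le_one)
  moreover have e2': "cmod (w - 1) ^ 2 = Re w * Re w - 2 * Re w + 1 + Im w * Im w"
    unfolding cmod_power2 by (simp add: power2_eq_square algebra_simps)
  moreover have "0 \<le> Im w * Im w" by simp
  ultimately have "Re w * Re w - 2 * Re w \<le> 0" by linarith
  hence r0: "0 \<le> Re w"
    by (smt (verit) mult_nonneg_nonneg mult_nonpos_nonpos)
  have img: "f ` {A,B,C} = {f U, f V, f W}" for f :: "complex \<Rightarrow> complex" using S by auto
  show ?thesis
  proof (cases "0 \<le> Im w")
    case True
    define f where "f z = (1/d) * z + (- U / d)" for z
    have sim: "similitude f" unfolding similitude_def f_def using d0 by (intro exI[of _ "1/d"] exI[of _ "- U / d"]) auto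
    have fz: "f z = (z - U) / d" for z by (simp add: f_def diff_divide_distrib)
    have "f U = 0" "f V = 1" "f W = w" using d0 by (simp_all add: fz w_def d_def[symmetric])
    hence "f ` {A,B,C} = {0, 1, w}" using img by simp
    hence "Pc A B C w" unfolding Pc_def using sim r0 r1 True n2 by blast
    thus ?thesis ..
  next
    case False
    define f where "f z = (1/cnj d) * cnj z + (- cnj U / cnj d)" for z
    have cd0: "cnj d \<noteq> 0" using d0 by simp
    have sim: "similitude f" unfolding similitude_def f_def using cd0 by (intro exI[of _ "1/cnj d"] exI[of _ "- cnj U / cnj d"]) auto
    have fz: "f z = cnj ((z - U) / d)" for z using cd0 by (simp add: f_def field_simps)
    have "f U = 0" "f V = 1" "f W = cnj w" using d0 by (simp_all add: fz w_def d_def[symmetric])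
    hence "f ` {A,B,C} = {0, 1, cnj w}" using img by simp
    moreover have "cmod (cnj w - 1) \<le> 1" using n2 by (metis complex_cnj_diff complex_cnj_one complex_mod_cnj)
    ultimately have "Pc A B C (cnj w)" unfolding Pc_def using sim r0 r1 False by auto
    thus ?thesis ..
  qed
qed

lemma Pc_exists:
  assumes nd: "nondeg (A,B,C)"
  shows "\<exists>p. Pc A B C p"
proof -
  let ?ab = "cmod (B - A)" and ?bc = "cmod (C - B)" and ?ca = "cmod (A - C)"
  have n: "cmod (x - y) = cmod (y - x)" for x y :: complex by (rule norm_minus_commute)
  have pos: "0 < max ?ab (max ?bc ?ca)" using nd by (auto simp: nondeg_def less_max_iff_disj)
  consider "?bc \<le> ?ab \<and> ?ca \<le> ?ab" | "?ab \<le> ?bc \<and> ?ca \<le> ?bc" | "?ab \<le> ?ca \<and> ?bc \<le> ?ca" by linarith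
  thus ?thesis
  proof cases
    case 1
    hence ne: "A \<noteq> B" using pos by (auto simp: max_def split: if_splits)
    show ?thesis
    proof (cases "?ca \<le> ?bc")
      case True thus ?thesis using 1 ne by (intro ex_core[of A B C]) (auto simp: n)
    next
      case False thus ?thesis using 1 ne by (intro ex_core[of B A C]) (auto simp: n)
    qed
  next
    case 2
    hence ne: "B \<noteq> C" using pos by (auto simp: max_def split: if_splits)
    show ?thesis
    proof (cases "?ab \<le> ?ca")
      case True thus ?thesis using 2 ne by (intro ex_core[of B C A]) (auto simp: n)
    next
      case False thus ?thesis using 2 ne by (intro ex_core[of C B A]) (auto simp: n)
    qed
  next
    case 3
    hence ne: "C \<noteq> A" using pos by (auto simp: max_def split: if_splits)
    show ?thesis
    proof (cases "?bc \<le> ?ab")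
      case True thus ?thesis using 3 ne by (intro ex_core[of C A B]) (auto simp: n)
    next
      case False thus ?thesis using 3 ne by (intro ex_core[of A C B]) (auto simp: n)
    qed
  qed
qed

lemma char_point_Pc:
  assumes nd: "nondeg (A,B,C)"
  shows "Pc A B C (char_point (A,B,C))"
proof -
  obtain p where "Pc A B C p" using Pc_exists[OF nd] by blast
  hence "\<exists>!p. Pc A B C p" using Pc_unique[OF nd] by blast
  thus ?thesis unfolding char_point_eq by (rule theI')
qed

lemma char_point_bound:
  assumes nd: "nondeg (A,B,C)"
  shows "0 \<le> Im (char_point (A,B,C)) \<and> Im (char_point (A,B,C)) * L2 A B C \<le> \<bar>cr A B C\<bar>"
  by (rule sat_analysis(1)[OF nd char_point_Pc[OF nd]])




definition sT :: "tri \<Rightarrow> real" where "sT T = (case T of (A,B,C) \<Rightarrow> Re (B - A))"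
definition tT :: "tri \<Rightarrow> real" where "tT T = (case T of (A,B,C) \<Rightarrow> Re (C - A))"
definition dT :: "tri \<Rightarrow> real" where "dT T = (case T of (A,B,C) \<Rightarrow> cr A B C)"
definition Zf :: "tri \<Rightarrow> real" where "Zf T = sqrt (\<bar>dT T\<bar> / Qf (sT T) (tT T))"

lemma Qf_eq0: "Qf s t = 0 \<longleftrightarrow> s = 0 \<and> t = 0"
proof
  assume "Qf s t = 0" thus "s = 0 \<and> t = 0" by (metis Qf_pos less_irrefl)
next
  assume "s = 0 \<and> t = 0" thus "Qf s t = 0" by (simp add: Qf_def)
qed

lemma Qf_nonneg: "0 \<le> Qf s t"
  by (metis Qf_eq0 Qf_pos order_refl less_imp_le)

lemma sq_le_of_abs: "\<bar>x::real\<bar> \<le> y \<Longrightarrow> x^2 \<le> y^2"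
  using power_mono[of "\<bar>x\<bar>" y 2] by simp

lemma Y_bound:
  assumes nd: "nondeg T"
  shows "Im (char_point T) \<le> 3/2 * Zf T ^ 2"
proof -
  obtain A B C where T: "T = (A,B,C)" by (cases T) auto
  have nd': "nondeg (A,B,C)" using nd T by simp
  note cb = char_point_bound[OF nd']
  have cb1: "0 \<le> Im (char_point T)" "Im (char_point T) * L2 A B C \<le> \<bar>cr A B C\<bar>"
    using cb T by simp_all
  have L: "0 < L2 A B C" by (rule L2_pos[OF nd'])
  define s where "s = Re (B - A)"
  define t where "t = Re (C - A)"
  have st: "sT T = s" "tT T = t" "dT T = cr A B C" by (simp_all add: T sT_def tT_def dT_def s_def t_def)
  have Zsq: "Zf T ^ 2 = \<bar>cr A B C\<bar> / Qf s t"
    unfolding Zf_def st using Qf_nonneg[of s t] by simp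
  show ?thesis
  proof (cases "Qf s t = 0")
    case True
    hence "s = 0" "t = 0" using Qf_eq0 by auto
    hence "cr A B C = 0" unfolding cr_def s_def t_def by simp
    hence "Im (char_point T) * L2 A B C \<le> 0" using cb1 by simp
    hence "Im (char_point T) \<le> 0" using L by (simp add: mult_le_0_iff)
    moreover have "0 \<le> Zf T ^ 2" by simp
    ultimately show ?thesis by linarith
  next
    case False
    hence Qp: "0 < Qf s t" using Qf_nonneg[of s t] by linarith
    have a1: "s^2 \<le> cmod (B - A)^2" unfolding s_def by (rule sq_le_of_abs[OF abs_Re_le_cmod])
    have a2': "t^2 \<le> cmod (C - A)^2" unfolding t_def by (rule sq_le_of_abs[OF abs_Re_le_cmod])
    have a2: "t^2 \<le> cmod (A - C)^2" using a2' by (simp add: norm_minus_commute)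
    have a3': "(Re (C - B))^2 \<le> cmod (C - B)^2" by (rule sq_le_of_abs[OF abs_Re_le_cmod])
    have "(s - t)^2 = (Re (C - B))^2" by (simp add: s_def t_def power2_eq_square algebra_simps)
    hence a3: "(s - t)^2 \<le> cmod (C - B)^2" using a3' by simp
    have l1: "cmod (B - A)^2 \<le> L2 A B C" "cmod (C - B)^2 \<le> L2 A B C" "cmod (A - C)^2 \<le> L2 A B C"
      by (simp_all add: L2_def)
    have Qe: "2 * Qf s t = s^2 + t^2 + (s - t)^2" by (simp add: Qf_def power2_eq_square algebra_simps)
    have QL: "2 * Qf s t \<le> 3 * L2 A B C" using Qe a1 a2 a3 l1 by linarith
    have "Im (char_point T) \<le> \<bar>cr A B C\<bar> / L2 A B C" using cb1 L by (simp add: pos_le_divide_eq)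
    also have "\<dots> = \<bar>cr A B C\<bar> * (1 / L2 A B C)" by simp
    also have "\<dots> \<le> \<bar>cr A B C\<bar> * (3/2 / Qf s t)"
    proof (rule mult_left_mono)
      show "1 / L2 A B C \<le> 3/2 / Qf s t" using QL L Qp by (simp add: divide_simps)
    qed simp
    also have "\<dots> = 3/2 * (\<bar>cr A B C\<bar> / Qf s t)" by simp
    finally show ?thesis unfolding Zsq .
  qed
qed

lemma subdiv_cases:
  assumes "(k::nat) < 6"
  shows "k = 0 \<or> k = 1 \<or> k = 2 \<or> k = 3 \<or> k = 4 \<or> k = 5"
  using assms by linarith

lemma child_d0: "dT (subdiv (A,B,C) 0) = dT (A,B,C) / 6"
  by (simp add: subdiv_def Let_def dT_def cr_def field_simps; simp add: algebra_simps)
lemma child_q0: "Qf (sT (subdiv (A,B,C) 0)) (tT (subdiv (A,B,C) 0)) = qk 0 (sT (A,B,C)) (tT (A,B,C)) / 36"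
  unfolding qk_simps by (simp add: subdiv_def Let_def sT_def tT_def Qf_def power2_eq_square field_simps; simp add: algebra_simps)

lemma child_d1: "dT (subdiv (A,B,C) 1) = dT (A,B,C) / 6"
  by (simp add: subdiv_def Let_def dT_def cr_def field_simps; simp add: algebra_simps)
lemma child_q1: "Qf (sT (subdiv (A,B,C) 1)) (tT (subdiv (A,B,C) 1)) = qk 1 (sT (A,B,C)) (tT (A,B,C)) / 36"
  unfolding qk_simps by (simp add: subdiv_def Let_def sT_def tT_def Qf_def power2_eq_square field_simps; simp add: algebra_simps)

lemma child_d2: "dT (subdiv (A,B,C) 2) = dT (A,B,C) / 6"
  by (simp add: subdiv_def Let_def dT_def cr_def field_simps; simp add: algebra_simps)
lemma child_q2: "Qf (sT (subdiv (A,B,C) 2)) (tT (subdiv (A,B,C) 2)) = qk 2 (sT (A,B,C)) (tT (A,B,C)) / 36"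
  unfolding qk_simps by (simp add: subdiv_def Let_def sT_def tT_def Qf_def power2_eq_square field_simps; simp add: algebra_simps)

lemma child_d3: "dT (subdiv (A,B,C) 3) = dT (A,B,C) / 6"
  by (simp add: subdiv_def Let_def dT_def cr_def field_simps; simp add: algebra_simps)
lemma child_q3: "Qf (sT (subdiv (A,B,C) 3)) (tT (subdiv (A,B,C) 3)) = qk 3 (sT (A,B,C)) (tT (A,B,C)) / 36"
  unfolding qk_simps by (simp add: subdiv_def Let_def sT_def tT_def Qf_def power2_eq_square field_simps; simp add: algebra_simps)

lemma child_d4: "dT (subdiv (A,B,C) 4) = dT (A,B,C) / 6"
  by (simp add: subdiv_def Let_def dT_def cr_def field_simps; simp add: algebra_simps)
lemma child_q4: "Qf (sT (subdiv (A,B,C) 4)) (tT (subdiv (A,B,C) 4)) = qk 4 (sT (A,B,C)) (tT (A,B,C)) / 36"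
  unfolding qk_simps by (simp add: subdiv_def Let_def sT_def tT_def Qf_def power2_eq_square field_simps; simp add: algebra_simps)

lemma child_d5: "dT (subdiv (A,B,C) 5) = dT (A,B,C) / 6"
  by (simp add: subdiv_def Let_def dT_def cr_def field_simps; simp add: algebra_simps)
lemma child_q5: "Qf (sT (subdiv (A,B,C) 5)) (tT (subdiv (A,B,C) 5)) = qk 5 (sT (A,B,C)) (tT (A,B,C)) / 36"
  unfolding qk_simps by (simp add: subdiv_def Let_def sT_def tT_def Qf_def power2_eq_square field_simps; simp add: algebra_simps)

lemma child_data:
  assumes k: "k < 6"
  shows "dT (subdiv T k) = dT T / 6 \<and> Qf (sT (subdiv T k)) (tT (subdiv T k)) = qk k (sT T) (tT T) / 36"
proof -
  obtain A B C where T: "T = (A,B,C)" by (cases T) auto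
  from subdiv_cases[OF k] show ?thesis
  proof (elim disjE)
    assume "k = 0" thus ?thesis using child_d0[of A B C] child_q0[of A B C] T by simp
  next
    assume "k = 1" thus ?thesis using child_d1[of A B C] child_q1[of A B C] T by simp
  next
    assume "k = 2" thus ?thesis using child_d2[of A B C] child_q2[of A B C] T by simp
  next
    assume "k = 3" thus ?thesis using child_d3[of A B C] child_q3[of A B C] T by simp
  next
    assume "k = 4" thus ?thesis using child_d4[of A B C] child_q4[of A B C] T by simp
  next
    assume "k = 5" thus ?thesis using child_d5[of A B C] child_q5[of A B C] T by simp
  qed
qed

lemma Zf_child:
  assumes k: "k < 6" and Q: "Qf (sT T) (tT T) \<noteq> 0"
  shows "Zf (subdiv T k) = Zf T * sqrt (6 * Qf (sT T) (tT T) / qk k (sT T) (tT T))"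
proof -
  note cd = child_data[OF k, of T]
  let ?Q = "Qf (sT T) (tT T)" and ?q = "qk k (sT T) (tT T)" and ?d = "\<bar>dT T\<bar>"
  have e1: "(?d / 6) / (?q / 36) = (?d / ?Q) * (6 * ?Q / ?q)" using Q by (simp add: field_simps)
  have "Zf (subdiv T k) = sqrt ((?d / 6) / (?q / 36))"
    unfolding Zf_def cd[THEN conjunct1] cd[THEN conjunct2] by (simp add: abs_divide)
  also have "\<dots> = sqrt ((?d / ?Q) * (6 * ?Q / ?q))" by (simp only: e1)
  also have "\<dots> = Zf T * sqrt (6 * ?Q / ?q)" unfolding Zf_def by (simp only: real_sqrt_mult)
  finally show ?thesis .
qed

lemma Zf_sum:
  "(\<Sum>k<6. Zf (subdiv T k)) \<le> 6 * (99/100) * Zf T"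
proof (cases "Qf (sT T) (tT T) = 0")
  case True
  hence "sT T = 0" "tT T = 0" using Qf_eq0 by auto
  have z: "Zf (subdiv T k) = 0" if "k < 6" for k
  proof -
    have "qk k 0 0 = 0" by (simp add: qk_def)
    hence "Qf (sT (subdiv T k)) (tT (subdiv T k)) = 0"
      using child_data[OF that, of T] \<open>sT T = 0\<close> \<open>tT T = 0\<close> by simp
    thus ?thesis by (simp add: Zf_def)
  qed
  have "(\<Sum>k<6. Zf (subdiv T k)) = 0" by (rule sum.neutral) (use z in auto)
  moreover have "Zf T = 0" using True by (simp add: Zf_def)
  ultimately show ?thesis by simp
next
  case False
  hence ne: "sT T \<noteq> 0 \<or> tT T \<noteq> 0" by (auto simp: Qf_eq0)
  have "(\<Sum>k<6. Zf (subdiv T k)) = Zf T * Sg (sT T) (tT T)"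
    unfolding Sg_def sum_distrib_left using Zf_child[OF _ False] by simp
  also have "\<dots> \<le> Zf T * (6 * (99/100))"
    by (rule mult_left_mono[OF Sg_bound[OF ne]]) (simp add: Zf_def Qf_nonneg)
  finally show ?thesis by simp
qed


abbreviation "Mc \<equiv> measure_pmf (pmf_of_set {0..<6::nat})"

lemma cs_eq: "choice_space = stream_space Mc" by (simp add: choice_space_def)

lemma tri_chain_Suc_shift: "tri_chain T (x ## \<omega>) (Suc n) = tri_chain (subdiv T x) \<omega> n"
proof (induction n arbitrary: T)
  case 0 thus ?case by simp
next
  case (Suc n)
  have "tri_chain T (x ## \<omega>) (Suc (Suc n)) = subdiv (tri_chain T (x ## \<omega>) (Suc n)) ((x ## \<omega>) !! Suc n)"
    by simp
  also have "\<dots> = subdiv (tri_chain (subdiv T x) \<omega> n) (\<omega> !! n)" using Suc by simp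
  finally show ?case by simp
qed

lemma tri_chain_Suc_shd: "tri_chain T \<omega> (Suc n) = tri_chain (subdiv T (shd \<omega>)) (stl \<omega>) n"
  using tri_chain_Suc_shift[of T "shd \<omega>" "stl \<omega>" n] by simp

lemma shd_meas: "shd \<in> stream_space Mc \<rightarrow>\<^sub>M count_space UNIV"
proof -
  have "shd \<in> stream_space Mc \<rightarrow>\<^sub>M Mc" by (rule measurable_shd)
  thus ?thesis by (simp add: measurable_cong_sets[OF refl sets_measure_pmf_count_space])
qed

lemma chain_meas:
  fixes F :: "tri \<Rightarrow> 'b::topological_space"
  shows "(\<lambda>\<omega>. F (tri_chain T \<omega> n)) \<in> borel_measurable (stream_space Mc)"
proof (induction n arbitrary: T)
  case 0 thus ?case by simp
next
  case (Suc n)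
  have "(\<lambda>\<omega>. (\<lambda>i \<omega>. F (tri_chain (subdiv T i) (stl \<omega>) n)) (shd \<omega>) \<omega>) \<in> borel_measurable (stream_space Mc)"
  proof (rule measurable_compose_countable[OF _ shd_meas])
    fix i
    show "(\<lambda>\<omega>. F (tri_chain (subdiv T i) (stl \<omega>) n)) \<in> borel_measurable (stream_space Mc)"
      using measurable_compose[OF measurable_stl Suc.IH[of "subdiv T i"]] by simp
  qed
  thus ?case by (simp only: tri_chain_Suc_shd)
qed

lemma Zf_nonneg: "0 \<le> Zf T" by (simp add: Zf_def Qf_nonneg)

lemma int_bound:
  "(\<integral>\<^sup>+\<omega>. ennreal (Zf (tri_chain T \<omega> n)) \<partial>stream_space Mc) \<le> ennreal ((99/100)^n * Zf T)"
proof (induction n arbitrary: T)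
  case 0
  interpret S: prob_space "stream_space Mc" by (rule prob_space.prob_space_stream_space[OF measure_pmf.prob_space_axioms])
  show ?case by (simp add: S.emeasure_space_1)
next
  case (Suc n)
  have "(\<integral>\<^sup>+\<omega>. ennreal (Zf (tri_chain T \<omega> (Suc n))) \<partial>stream_space Mc)
      = (\<integral>\<^sup>+x. (\<integral>\<^sup>+\<omega>. ennreal (Zf (tri_chain T (x ## \<omega>) (Suc n))) \<partial>stream_space Mc) \<partial>Mc)"
    by (rule prob_space.nn_integral_stream_space[OF measure_pmf.prob_space_axioms]) (rule chain_meas)
  also have "\<dots> = (\<integral>\<^sup>+x. (\<integral>\<^sup>+\<omega>. ennreal (Zf (tri_chain (subdiv T x) \<omega> n)) \<partial>stream_space Mc) \<partial>Mc)"
    by (simp only: tri_chain_Suc_shift)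
  also have "\<dots> \<le> (\<integral>\<^sup>+x. ennreal ((99/100)^n * Zf (subdiv T x)) \<partial>Mc)"
    by (rule nn_integral_mono) (rule Suc.IH)
  also have "\<dots> = (\<Sum>x\<in>{0..<6}. ennreal ((99/100)^n * Zf (subdiv T x))) / 6"
    by (subst nn_integral_pmf_of_set) auto
  also have "\<dots> = ennreal ((99/100)^n * (\<Sum>x<6. Zf (subdiv T x)) / 6)"
  proof -
    have "(\<Sum>x<6. ennreal ((99/100)^n * Zf (subdiv T x))) = ennreal ((99/100)^n * (\<Sum>x<6. Zf (subdiv T x)))"
      by (simp add: sum_ennreal Zf_nonneg sum_distrib_left)
    moreover have X: "0 \<le> (99/100::real)^n * (\<Sum>x<6. Zf (subdiv T x))"
      by (simp add: Zf_nonneg sum_nonneg)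
    moreover have "ennreal ((99/100)^n * (\<Sum>x<6. Zf (subdiv T x))) / 6
        = ennreal ((99/100)^n * (\<Sum>x<6. Zf (subdiv T x)) / 6)"
    proof -
      have "ennreal ((99/100)^n * (\<Sum>x<6. Zf (subdiv T x))) / ennreal 6
        = ennreal ((99/100)^n * (\<Sum>x<6. Zf (subdiv T x)) / 6)" by (rule divide_ennreal[OF X]) simp
      thus ?thesis by (simp only: ennreal_numeral)
    qed
    ultimately show ?thesis by (simp add: atLeast0LessThan)
  qed
  also have "\<dots> \<le> ennreal ((99/100)^Suc n * Zf T)"
  proof (rule ennreal_leI)
    have "(99/100)^n * (\<Sum>x<6. Zf (subdiv T x)) \<le> (99/100)^n * (6 * (99/100) * Zf T)"
      by (rule mult_left_mono[OF Zf_sum]) simp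
    thus "(99/100)^n * (\<Sum>x<6. Zf (subdiv T x)) / 6 \<le> (99/100)^Suc n * Zf T" by simp
  qed
  finally show ?case .
qed


lemma nondeg_iff: "nondeg (A,B,C) \<longleftrightarrow> \<not> (B - A = 0 \<and> C - A = 0)"
  by (auto simp: nondeg_def)

lemma nondeg_subdiv:
  assumes nd: "nondeg T" and k: "k < 6"
  shows "nondeg (subdiv T k)"
proof -
  obtain A B C where T: "T = (A,B,C)" by (cases T) auto
  define b where "b = B - A"
  define c where "c = C - A"
  have bc: "\<not> (b = 0 \<and> c = 0)" using nd T by (simp add: nondeg_iff b_def c_def)
  have B: "B = A + b" and C: "C = A + c" by (simp_all add: b_def c_def)
  from subdiv_cases[OF k] show ?thesis
  proof (elim disjE)
    assume "k = 0" thus ?thesis using bc unfolding T B C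
      by (auto simp: subdiv_def Let_def nondeg_iff field_simps)
  next
    assume "k = 1" thus ?thesis using bc unfolding T B C
      by (auto simp: subdiv_def Let_def nondeg_iff field_simps)
  next
    assume "k = 2" thus ?thesis using bc unfolding T B C
      by (auto simp: subdiv_def Let_def nondeg_iff field_simps)
  next
    assume "k = 3" thus ?thesis using bc unfolding T B C
      by (auto simp: subdiv_def Let_def nondeg_iff field_simps)
  next
    assume "k = 4" thus ?thesis using bc unfolding T B C
      by (auto simp: subdiv_def Let_def nondeg_iff field_simps)
  next
    assume "k = 5" thus ?thesis using bc unfolding T B C
      by (auto simp: subdiv_def Let_def nondeg_iff field_simps)
  qed
qed

lemma nondeg_chain:
  assumes "nondeg T0" "\<forall>i. \<omega> !! i < 6"
  shows "nondeg (tri_chain T0 \<omega> n)"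
  by (induction n) (use assms nondeg_subdiv in auto)

lemma AE_small: "AE \<omega> in stream_space Mc. \<forall>i. \<omega> !! i < 6"
proof -
  have "AE \<omega> in stream_space Mc. stream_all (\<lambda>x. x < 6) \<omega>"
  proof (rule prob_space.AE_stream_all[OF measure_pmf.prob_space_axioms])
    show "Measurable.pred Mc (\<lambda>x. x < 6)" by simp
    show "AE x in Mc. x < 6" by (simp add: AE_measure_pmf_iff)
  qed
  thus ?thesis by eventually_elim (auto simp: sset_range)
qed

definition "th = (199/200::real)"

lemma AE_eventually:
  "AE \<omega> in stream_space Mc. eventually (\<lambda>n. Zf (tri_chain T \<omega> n) < th ^ n) sequentially"
proof -
  let ?S = "stream_space Mc"
  interpret S: prob_space ?S by (rule prob_space.prob_space_stream_space[OF measure_pmf.prob_space_axioms])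
  define A where "A n = {\<omega> \<in> space ?S. th ^ n \<le> Zf (tri_chain T \<omega> n)}" for n
  have thp: "0 < th" "th < 1" by (simp_all add: th_def)
  have Am[measurable]: "A n \<in> sets ?S" for n
  proof -
    have "(\<lambda>\<omega>. Zf (tri_chain T \<omega> n)) \<in> borel_measurable ?S" by (rule chain_meas)
    thus ?thesis unfolding A_def borel_measurable_iff_ge by blast
  qed
  have em: "emeasure ?S (A n) \<le> ennreal ((99/100 / th)^n * Zf T)" for n
  proof -
    have tn: "0 < th ^ n" using thp by simp
    have "emeasure ?S (A n) = (\<integral>\<^sup>+\<omega>. indicator (A n) \<omega> \<partial>?S)" using Am by simp
    also have "\<dots> \<le> (\<integral>\<^sup>+\<omega>. ennreal (1 / th ^ n) * ennreal (Zf (tri_chain T \<omega> n)) \<partial>?S)"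
    proof (rule nn_integral_mono)
      fix \<omega> assume "\<omega> \<in> space ?S"
      show "indicator (A n) \<omega> \<le> ennreal (1 / th ^ n) * ennreal (Zf (tri_chain T \<omega> n))"
      proof (cases "\<omega> \<in> A n")
        case True
        hence "1 \<le> (1 / th ^ n) * Zf (tri_chain T \<omega> n)" using tn unfolding A_def
          by (simp add: field_simps)
        hence "ennreal 1 \<le> ennreal ((1 / th ^ n) * Zf (tri_chain T \<omega> n))" by (rule ennreal_leI)
        also have "\<dots> = ennreal (1 / th ^ n) * ennreal (Zf (tri_chain T \<omega> n))"
          by (rule ennreal_mult) (use tn Zf_nonneg in auto)
        finally show ?thesis using True by simp
      next
        case False thus ?thesis by simp
      qed
    qed
    also have "\<dots> = ennreal (1 / th ^ n) * (\<integral>\<^sup>+\<omega>. ennreal (Zf (tri_chain T \<omega> n)) \<partial>?S)"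
      by (rule nn_integral_cmult) (rule chain_meas)
    also have "\<dots> \<le> ennreal (1 / th ^ n) * ennreal ((99/100)^n * Zf T)"
      by (rule mult_left_mono[OF int_bound]) simp
    also have "\<dots> = ennreal ((99/100 / th)^n * Zf T)"
      using tn by (simp add: ennreal_mult[symmetric] Zf_nonneg power_divide)
    finally show ?thesis .
  qed
  have me: "measure ?S (A n) \<le> (99/100 / th)^n * Zf T" for n
  proof -
    have "ennreal (measure ?S (A n)) \<le> ennreal ((99/100 / th)^n * Zf T)"
      using em[of n] by (simp add: S.emeasure_eq_measure)
    moreover have "0 \<le> (99/100 / th)^n * Zf T" using thp by (simp add: Zf_nonneg)
    ultimately show ?thesis by (simp add: ennreal_le_iff)
  qed
  have "summable (\<lambda>n. measure ?S (A n))"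
  proof (rule summable_comparison_test)
    show "\<exists>N. \<forall>n\<ge>N. norm (measure ?S (A n)) \<le> (99/100 / th)^n * Zf T" using me by auto
    have "norm (99/100 / th) < 1" by (simp add: th_def)
    thus "summable (\<lambda>n. (99/100 / th)^n * Zf T)" by (intro summable_mult2 summable_geometric)
  qed
  hence "AE \<omega> in ?S. eventually (\<lambda>n. \<omega> \<in> space ?S - A n) sequentially"
    by (intro borel_cantelli_AE1) (auto simp: S.emeasure_eq_measure)
  thus ?thesis
    by eventually_elim (auto simp: A_def elim: eventually_mono)
qed

lemma limsup_bound:
  assumes nd: "nondeg T0" and sm: "\<forall>i. \<omega> !! i < 6"
    and ev: "eventually (\<lambda>n. Zf (tri_chain T0 \<omega> n) < th ^ n) sequentially"
  shows "limsup (\<lambda>n. ereal (1 / real n) * lnE (Im (char_point (tri_chain T0 \<omega> n)))) \<le> ereal (ln th)"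
proof -
  have thp: "0 < th" "th < 1" by (simp_all add: th_def)
  have "(\<lambda>n. th ^ n) \<longlonglongrightarrow> 0" using thp by (intro LIMSEQ_power_zero) simp
  hence ev2: "eventually (\<lambda>n. th ^ n < 2/3) sequentially" by (rule order_tendstoD) simp
  have ev3: "eventually (\<lambda>n. 1 \<le> n) sequentially" by (rule eventually_ge_at_top)
  have "eventually (\<lambda>n. ereal (1 / real n) * lnE (Im (char_point (tri_chain T0 \<omega> n))) \<le> ereal (ln th)) sequentially"
    using ev ev2 ev3
  proof eventually_elim
    case (elim n)
    let ?T = "tri_chain T0 \<omega> n"
    let ?Y = "Im (char_point ?T)"
    have ndT: "nondeg ?T" by (rule nondeg_chain[OF nd sm])
    have z0: "0 \<le> Zf ?T" by (rule Zf_nonneg)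
    have "Zf ?T ^ 2 \<le> (th ^ n) ^ 2" using elim(1) z0 by (intro power_mono) auto
    hence "3/2 * Zf ?T ^ 2 \<le> 3/2 * (th ^ n * th ^ n)" by (simp add: power2_eq_square)
    also have "\<dots> = (3/2 * th ^ n) * th ^ n" by simp
    also have "\<dots> \<le> 1 * th ^ n" using elim(2) thp by (intro mult_right_mono) auto
    finally have Yb: "?Y \<le> th ^ n" using Y_bound[OF ndT] by simp
    have np: "0 < real n" using elim(3) by simp
    show ?case
    proof (cases "?Y \<le> 0")
      case True
      thus ?thesis using np by (simp add: lnE_def)
    next
      case False
      hence Yp: "0 < ?Y" by simp
      have "ln ?Y \<le> ln (th ^ n)" using Yp Yb by simp
      also have "\<dots> = real n * ln th" using thp by (simp add: ln_realpow)
      finally have "ln ?Y \<le> real n * ln th" .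
      hence "1 / real n * ln ?Y \<le> ln th" using np by (simp add: field_simps)
      thus ?thesis using Yp by (simp add: lnE_def)
    qed
  qed
  thus ?thesis by (rule Limsup_bounded)
qed

theorem theorem1:
  shows "\<exists>c::real. c > 0 \<and>
    (\<forall>T0. nondeg T0 \<longrightarrow>
      (AE \<omega> in choice_space.
         limsup (\<lambda>n. ereal (1 / real n) * lnE (Im (char_point (tri_chain T0 \<omega> n))))
           \<le> ereal (- c)))"
proof (intro exI conjI allI impI)
  show "0 < - ln th" by (simp add: th_def)
  fix T0 assume nd: "nondeg T0"
  have "AE \<omega> in stream_space Mc. limsup (\<lambda>n. ereal (1 / real n) * lnE (Im (char_point (tri_chain T0 \<omega> n)))) \<le> ereal (ln th)"
    using AE_small AE_eventually[of T0]
    by eventually_elim (rule limsup_bound[OF nd])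
  thus "AE \<omega> in choice_space. limsup (\<lambda>n. ereal (1 / real n) * lnE (Im (char_point (tri_chain T0 \<omega> n)))) \<le> ereal (- (- ln th))"
    unfolding cs_eq by simp
qed

end
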